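(* The positive root vectors of $U_q(\mathfrak{sp}_{2n})$ satisfy $$E_{1,2}=[E_1,E_2]_{q^2};$$ $$E_{-i,j}=[E_{-i,j-1},E_j]_q\quad\text{and}\quad E_{i,j}=[E_{i,j-1},E_j]_q\qquad(3\le i+2\le j\le n);$$ $$E_{j-1,j}=[E_{j-1},E_{j-2,j}]_q\qquad(3\le j\le n);$$ $$E_{j,j}=[2]_q^{-1}[E_{1,j},E_{-1,j}]\qquad(2\le j\le n).$$
   Context: Let $\mathbf{k}$ be a field of characteristic $0$, $q\in\mathbf{k}$ invertible, not a root of unity, $n\ge2$, $[m]_q=\frac{q^m-q^{-m}}{q-q^{-1}}$, $[m]_q!=[1]_q\cdots[m]_q$, $[A,B]_v=AB-vBA$, $[A,B]=[A,B]_1$. $U_q(\mathfrak{sp}_{2n})$ is generated by $E_i,F_i,K_i^{\pm1}$ ($1\le i\le n$) with relations $K_iK_j=K_jK_i$, $K_iK_i^{-1}=1$, $K_iE_jK_i^{-1}=q_i^{a_{ij}}E_j$, $K_iF_jK_i^{-1}=q_i^{-a_{ij}}F_j$, $[E_i,F_j]=\delta_{ij}\frac{K_i-K_i^{-1}}{q_i-q_i^{-1}}$, and quantum Serre relations; $q_1=q^2$, $q_i=q$ ($i>1$); Cartan matrix $a_{ii}=2$, $a_{12}=-1$, $a_{21}=-2$, $a_{i,i+1}=a_{i+1,i}=-1$ ($2\le i\le n-1$), $a_{ij}=0$ for $|i-j|>1$. Lusztig's automorphisms $T_i$: $T_i(K_j)=K_jK_i^{-a_{ij}}$, $T_i(E_i)=-F_iK_i^{-1}$,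 $T_i(F_i)=-K_iE_i$, and for $j\ne i$: $T_i(E_j)=\sum_{r=0}^{-a_{ij}}(-1)^rq_i^rE_i^{(-a_{ij}-r)}E_jE_i^{(r)}$, $T_i(F_j)=\sum_{r=0}^{-a_{ij}}(-1)^rq_i^{-r}F_i^{(r)}F_jF_i^{(-a_{ij}-r)}$, with $E_i^{(r)}=E_i^r/[r]_{q_i}!$, $F_i^{(r)}=F_i^r/[r]_{q_i}!$. $T_{\gamma_i}=T_iT_{i-1}\cdots T_2T_1T_2\cdots T_{i-1}T_i$. Positive root vectors: $E_{1,1}=E_1$, and for $1<j\le n$: $E_{j-1,j}=T_{\gamma_1}\cdots T_{\gamma_{j-1}}(E_j)$; $E_{i,j}=T_{\gamma_1}\cdots T_{\gamma_{j-1}}T_jT_{j-1}\cdots T_{i+2}(E_{i+1})$ for $1\le i<j-1$; $E_{j,j}=T_{\gamma_1}\cdots T_{\gamma_{j-1}}T_jT_{j-1}\cdots T_2(E_1)$; $E_{-i,j}=T_{\gamma_1}\cdots T_{\gamma_{j-1}}T_jT_{j-1}\cdots T_2T_1T_2\cdots T_i(E_{i+1})$ for $1\le i<j$. *)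

theory Defs
  imports Complex_Main
begin

definition cartan :: "nat \<Rightarrow> nat \<Rightarrow> int" where
  "cartan i j = (if i = j then 2
                 else if i = 1 \<and> j = 2 then -1
                 else if i = 2 \<and> j = 1 then -2
                 else if i = j + 1 \<or> j = i + 1 then -1
                 else 0)"

definition qi :: "'k::field \<Rightarrow> nat \<Rightarrow> 'k" where
  "qi q i = (if i = 1 then q ^ 2 else q)"

definition qnum :: "'k::field \<Rightarrow> nat \<Rightarrow> 'k" where
  "qnum v m = (v ^ m - inverse v ^ m) / (v - inverse v)"

definition qfact :: "'k::field \<Rightarrow> nat \<Rightarrow> 'k" where
  "qfact v m = (\<Prod>k\<in>{1..m}. qnum v k)"

text \<open>Scalars act on the algebra 'a through a central ring homomorphism of_k.
  Divided power x^(r) = x^r / [r]_v!.\<close>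
definition dpow :: "('k::field \<Rightarrow> 'a::ring_1) \<Rightarrow> 'k \<Rightarrow> 'a \<Rightarrow> nat \<Rightarrow> 'a" where
  "dpow of_k v x r = of_k (inverse (qfact v r)) * x ^ r"

definition Kpow :: "(nat \<Rightarrow> 'a::ring_1) \<Rightarrow> (nat \<Rightarrow> 'a) \<Rightarrow> nat \<Rightarrow> int \<Rightarrow> 'a" where
  "Kpow K Kinv i m = (if 0 \<le> m then K i ^ nat m else Kinv i ^ nat (- m))"

definition qcomm :: "('k \<Rightarrow> 'a::ring_1) \<Rightarrow> 'k \<Rightarrow> 'a \<Rightarrow> 'a \<Rightarrow> 'a" where
  "qcomm of_k v A B = A * B - of_k v * B * A"

definition Uq_relations ::
  "('k::field \<Rightarrow> 'a::ring_1) \<Rightarrow> nat \<Rightarrow> 'k \<Rightarrow> (nat \<Rightarrow> 'a) \<Rightarrow> (nat \<Rightarrow> 'a) \<Rightarrow> (nat \<Rightarrow> 'a) \<Rightarrow> (nat \<Rightarrow> 'a) \<Rightarrow> bool" where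
  "Uq_relations of_k n q E F K Kinv \<longleftrightarrow>
    (\<forall>i\<in>{1..n}. \<forall>j\<in>{1..n}.
        K i * K j = K j * K i \<and> K i * Kinv j = Kinv j * K i \<and> Kinv i * Kinv j = Kinv j * Kinv i) \<and>
    (\<forall>i\<in>{1..n}. K i * Kinv i = 1 \<and> Kinv i * K i = 1) \<and>
    (\<forall>i\<in>{1..n}. \<forall>j\<in>{1..n}. K i * E j * Kinv i = of_k (qi q i powi cartan i j) * E j) \<and>
    (\<forall>i\<in>{1..n}. \<forall>j\<in>{1..n}. K i * F j * Kinv i = of_k (qi q i powi (- cartan i j)) * F j) \<and>
    (\<forall>i\<in>{1..n}. \<forall>j\<in>{1..n}. E i * F j - F j * E i =
        (if i = j then of_k (inverse (qi q i - inverse (qi q i))) * (K i - Kinv i) else 0)) \<and>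
    (\<forall>i\<in>{1..n}. \<forall>j\<in>{1..n}. i \<noteq> j \<longrightarrow>
        (\<Sum>r = 0..nat (1 - cartan i j). of_k ((-1) ^ r) *
            dpow of_k (qi q i) (E i) (nat (1 - cartan i j) - r) * E j * dpow of_k (qi q i) (E i) r) = 0) \<and>
    (\<forall>i\<in>{1..n}. \<forall>j\<in>{1..n}. i \<noteq> j \<longrightarrow>
        (\<Sum>r = 0..nat (1 - cartan i j). of_k ((-1) ^ r) *
            dpow of_k (qi q i) (F i) (nat (1 - cartan i j) - r) * F j * dpow of_k (qi q i) (F i) r) = 0)"

definition lusztig_T ::
  "('k::field \<Rightarrow> 'a::ring_1) \<Rightarrow> nat \<Rightarrow> 'k \<Rightarrow> (nat \<Rightarrow> 'a) \<Rightarrow> (nat \<Rightarrow> 'a) \<Rightarrow> (nat \<Rightarrow> 'a) \<Rightarrow> (nat \<Rightarrow> 'a)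
     \<Rightarrow> (nat \<Rightarrow> 'a \<Rightarrow> 'a) \<Rightarrow> bool" where
  "lusztig_T of_k n q E F K Kinv T \<longleftrightarrow>
    (\<forall>i\<in>{1..n}.
       (\<forall>x y. T i (x + y) = T i x + T i y) \<and>
       (\<forall>x y. T i (x * y) = T i x * T i y) \<and>
       T i 1 = 1 \<and>
       (\<forall>c. T i (of_k c) = of_k c) \<and>
       (\<forall>j\<in>{1..n}. T i (K j) = K j * Kpow K Kinv i (- cartan i j)) \<and>
       T i (E i) = - (F i * Kinv i) \<and>
       T i (F i) = - (K i * E i) \<and>
       (\<forall>j\<in>{1..n}. j \<noteq> i \<longrightarrow>
          T i (E j) = (\<Sum>r = 0..nat (- cartan i j). of_k ((-1) ^ r * qi q i ^ r) *
              dpow of_k (qi q i) (E i) (nat (- cartan i j) - r) * E j * dpow of_k (qi q i) (E i) r)) \<and>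
       (\<forall>j\<in>{1..n}. j \<noteq> i \<longrightarrow>
          T i (F j) = (\<Sum>r = 0..nat (- cartan i j). of_k ((-1) ^ r * inverse (qi q i) ^ r) *
              dpow of_k (qi q i) (F i) r * F j * dpow of_k (qi q i) (F i) (nat (- cartan i j) - r))))"

text \<open>Words of indices; foldr T [a,b,...] x = T a (T b (... x)).
  gamma_word i encodes T_{gamma_i} = T_i T_{i-1} ... T_2 T_1 T_2 ... T_i;
  Gword m encodes T_{gamma_1} ... T_{gamma_m}.\<close>
definition gamma_word :: "nat \<Rightarrow> nat list" where
  "gamma_word i = rev [2..<i+1] @ [1] @ [2..<i+1]"

definition Gword :: "nat \<Rightarrow> nat list" where
  "Gword m = concat (map gamma_word [1..<m+1])"

text \<open>E_{i,j} for 1 \<le> i < j: covers both E_{j-1,j} (i = j-1) and the case i < j-1.\<close>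
definition Epos :: "(nat \<Rightarrow> 'a \<Rightarrow> 'a) \<Rightarrow> (nat \<Rightarrow> 'a) \<Rightarrow> nat \<Rightarrow> nat \<Rightarrow> 'a" where
  "Epos T E i j = foldr T (Gword (j - 1) @ rev [i+2..<j+1]) (E (i + 1))"

definition Ediag :: "(nat \<Rightarrow> 'a \<Rightarrow> 'a) \<Rightarrow> (nat \<Rightarrow> 'a) \<Rightarrow> nat \<Rightarrow> 'a" where
  "Ediag T E j = foldr T (Gword (j - 1) @ rev [2..<j+1]) (E 1)"

definition Eneg :: "(nat \<Rightarrow> 'a \<Rightarrow> 'a) \<Rightarrow> (nat \<Rightarrow> 'a) \<Rightarrow> nat \<Rightarrow> nat \<Rightarrow> 'a" where
  "Eneg T E i j = foldr T (Gword (j - 1) @ rev [2..<j+1] @ [1] @ [2..<i+1]) (E (i + 1))"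

end

theory Submission
  imports Defs
begin


locale sc =
  fixes of_k :: "'k::field_char_0 \<Rightarrow> 'a::ring_1"
  assumes of_k_1: "of_k 1 = 1"
    and of_k_add: "\<forall>a b. of_k (a + b) = of_k a + of_k b"
    and of_k_mult: "\<forall>a b. of_k (a * b) = of_k a * of_k b"
    and of_k_central: "\<forall>c x. of_k c * x = x * of_k c"
begin

lemma ok_add[simp]: "of_k (a + b) = of_k a + of_k b" using of_k_add by blast
lemma ok_mult: "of_k (a * b) = of_k a * of_k b" using of_k_mult by blast
lemma ok_0[simp]: "of_k 0 = 0"
proof -
  have "of_k 0 = of_k 0 + of_k 0" using ok_add[of 0 0] by simp
  thus ?thesis by simp
qed
lemma ok_1[simp]: "of_k 1 = 1" using of_k_1 .
lemma ok_uminus[simp]: "of_k (- a) = - of_k a"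
proof -
  have "of_k (-a) + of_k a = 0" using ok_add[of "-a" a] by simp
  thus ?thesis by (simp add: eq_neg_iff_add_eq_0)
qed
lemma ok_diff[simp]: "of_k (a - b) = of_k a - of_k b"
  using ok_add[of a "-b"] by simp
lemma ok_cen: "of_k c * x = x * of_k c" using of_k_central by blast
lemma ok_left: "x * (of_k c * y) = of_k c * (x * y)"
  by (metis mult.assoc ok_cen)
lemma ok_right: "x * of_k c = of_k c * x" using ok_cen by simp
lemma ok_mm: "of_k a * (of_k b * x) = of_k (a*b) * x"
  by (simp add: ok_mult mult.assoc)
lemma ok_mm2: "of_k a * of_k b = of_k (a*b)"
  by (simp add: ok_mult)
lemma ok_numeral[simp]: "of_k (numeral w) = numeral w"
  by (induct w) (simp_all only: numeral.simps ok_add ok_1)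

definition S :: "'k \<Rightarrow> 'a \<Rightarrow> 'a" where "S c x = of_k c * x"

lemma S_ml[simp]: "S c x * y = S c (x*y)" by (simp add: S_def mult.assoc)
lemma S_mr[simp]: "x * S c y = S c (x*y)" by (simp add: S_def ok_left)
lemma S_S[simp]: "S c (S d x) = S (c*d) x" by (simp add: S_def ok_mm)
lemma S_add[simp]: "S c (x+y) = S c x + S c y" by (simp add: S_def algebra_simps)
lemma S_diff[simp]: "S c (x-y) = S c x - S c y" by (simp add: S_def algebra_simps)
lemma S_uminus[simp]: "S c (-x) = - S c x" by (simp add: S_def algebra_simps)
lemma S_0[simp]: "S c 0 = 0" "S 0 x = 0" by (simp_all add: S_def)
lemma S_1[simp]: "S 1 x = x" by (simp add: S_def)
lemma S_neg1: "S (-1) x = - x" by (simp add: S_def)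
lemma S_addk: "S a x + S b x = S (a+b) x" by (simp add: S_def algebra_simps)
lemma S_diffk: "S a x - S b x = S (a-b) x" by (simp add: S_def algebra_simps)
lemma S_ok: "of_k c * x = S c x" by (simp add: S_def)
lemma S_ok2: "x * of_k c = S c x" by (simp add: S_def ok_cen)

definition Q :: "'k \<Rightarrow> 'a \<Rightarrow> 'a \<Rightarrow> 'a" where
  "Q v A B = A * B - S v (B * A)"

lemma Q_qcomm: "qcomm of_k v A B = Q v A B" by (simp add: qcomm_def Q_def S_def mult.assoc)

lemma J1: assumes "A * C = C * A" shows "Q v (Q u A B) C = Q u A (Q v B C)"
proof -
  have "Q v (Q u A B) C = A*B*C - S u (B*A*C) - S v (C*A*B) + S (v*u) (C*B*A)"
    unfolding Q_def by (simp add: algebra_simps)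
  also have "\<dots> = A*B*C - S u (B*C*A) - S v (A*C*B) + S (v*u) (C*B*A)"
    using assms by (simp add: mult.assoc)
  also have "\<dots> = Q u A (Q v B C)"
    unfolding Q_def by (simp add: algebra_simps mult.commute)
  finally show ?thesis .
qed

end


lemma cartan_far: "i + 2 \<le> j \<or> j + 2 \<le> i \<Longrightarrow> cartan i j = 0"
  by (auto simp: cartan_def)
lemma cartan_up: "i \<ge> 1 \<Longrightarrow> cartan i (i+1) = -1"
  by (auto simp: cartan_def)
lemma cartan_down: "i \<ge> 2 \<Longrightarrow> (i,j) \<noteq> (2,1) \<Longrightarrow> i = j + 1 \<Longrightarrow> cartan i j = -1"
  by (auto simp: cartan_def)
lemma cartan_21: "cartan 2 1 = -2" by (simp add: cartan_def)
lemma cartan_diag: "cartan i i = 2" by (simp add: cartan_def)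
lemma qi_1: "qi q 1 = q^2" by (simp add: qi_def)
lemma qi_ge2: "i \<ge> 2 \<Longrightarrow> qi q i = q" by (simp add: qi_def)

locale uq = sc of_k for of_k :: "'k::field_char_0 \<Rightarrow> 'a::ring_1" +
  fixes q :: 'k and n :: nat
    and E F K Kinv :: "nat \<Rightarrow> 'a"
    and T :: "nat \<Rightarrow> 'a \<Rightarrow> 'a"
  assumes q_nz: "q \<noteq> 0"
    and q_not_root: "\<forall>m::nat. m > 0 \<longrightarrow> q ^ m \<noteq> 1"
    and n_ge: "n \<ge> 2"
    and rels: "Uq_relations of_k n q E F K Kinv"
    and lusztig: "lusztig_T of_k n q E F K Kinv T"
begin

lemma q2_ne1: "q^2 \<noteq> 1" using q_not_root by auto
lemma q4_ne1: "q^4 \<noteq> 1" using q_not_root by auto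
lemma qi_nz: "qi q i \<noteq> 0" using q_nz by (simp add: qi_def)
lemma qi_sq: "qi q i * qi q i \<noteq> 1"
proof (cases "i = 1")
  case True
  have "q^2 * q^2 = q^4" by algebra
  thus ?thesis using True q4_ne1 by (simp add: qi_def)
next
  case False
  have "q * q = q^2" by algebra
  thus ?thesis using False q2_ne1 by (simp add: qi_def)
qed
lemma qi_d: "qi q i - inverse (qi q i) \<noteq> 0"
proof
  assume "qi q i - inverse (qi q i) = 0"
  hence "qi q i * qi q i = qi q i * inverse (qi q i)" by simp
  thus False using qi_sq qi_nz by simp
qed
lemma qnum1: "qnum (qi q i) 1 = 1"
proof -
  have "qnum (qi q i) 1 = (qi q i - inverse (qi q i)) / (qi q i - inverse (qi q i))"
    by (simp add: qnum_def)
  thus ?thesis using qi_d[of i] by simp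
qed
lemma qfact0: "qfact v 0 = 1" by (simp add: qfact_def)
lemma qnum1': "qnum (qi q i) (Suc 0) = 1" using qnum1 by simp
lemma qfact1: "qfact (qi q i) 1 = 1" by (simp add: qfact_def qnum1')
lemma dpow0: "dpow of_k v x 0 = 1" by (simp add: dpow_def qfact0)
lemma dpow1: "dpow of_k (qi q i) x 1 = x" by (simp only: dpow_def qfact1 power_one_right inverse_1 ok_1 mult_1_left)
lemma dpow1': "dpow of_k (qi q i) x (Suc 0) = x" using dpow1 by simp

lemmas R0 = rels[unfolded Uq_relations_def]
lemmas R1 = R0[THEN conjunct1] and R2 = R0[THEN conjunct2, THEN conjunct1]
  and R3 = R0[THEN conjunct2, THEN conjunct2, THEN conjunct1]
  and R4 = R0[THEN conjunct2, THEN conjunct2, THEN conjunct2, THEN conjunct1]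
  and R5 = R0[THEN conjunct2, THEN conjunct2, THEN conjunct2, THEN conjunct2, THEN conjunct1]
  and R6 = R0[THEN conjunct2, THEN conjunct2, THEN conjunct2, THEN conjunct2, THEN conjunct2, THEN conjunct1]
  and R7 = R0[THEN conjunct2, THEN conjunct2, THEN conjunct2, THEN conjunct2, THEN conjunct2, THEN conjunct2]

lemma rels_KK: "i \<in> {1..n} \<Longrightarrow> j \<in> {1..n} \<Longrightarrow>
   K i * K j = K j * K i \<and> K i * Kinv j = Kinv j * K i \<and> Kinv i * Kinv j = Kinv j * Kinv i"
  using R1 by blast
lemma KKinv: "i \<in> {1..n} \<Longrightarrow> K i * Kinv i = 1" using bspec[OF R2] by (rule conjunct1)
lemma KinvK: "i \<in> {1..n} \<Longrightarrow> Kinv i * K i = 1" using bspec[OF R2] by (rule conjunct2)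
lemma KEK: "i \<in> {1..n} \<Longrightarrow> j \<in> {1..n} \<Longrightarrow> K i * E j * Kinv i = S (qi q i powi cartan i j) (E j)"
  unfolding S_def using R3 by blast
lemma KFK: "i \<in> {1..n} \<Longrightarrow> j \<in> {1..n} \<Longrightarrow> K i * F j * Kinv i = S (qi q i powi (- cartan i j)) (F j)"
  unfolding S_def using R4 by blast
lemma EF: "i \<in> {1..n} \<Longrightarrow> j \<in> {1..n} \<Longrightarrow> E i * F j - F j * E i =
        (if i = j then S (inverse (qi q i - inverse (qi q i))) (K i - Kinv i) else 0)"
  unfolding S_def using R5 by blast
lemma SerreE: "i \<in> {1..n} \<Longrightarrow> j \<in> {1..n} \<Longrightarrow> i \<noteq> j \<Longrightarrow>
        (\<Sum>r = 0..nat (1 - cartan i j). of_k ((-1) ^ r) *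
            dpow of_k (qi q i) (E i) (nat (1 - cartan i j) - r) * E j * dpow of_k (qi q i) (E i) r) = 0"
  using R6 by (meson bspec)

lemma E_comm: assumes "i \<in> {1..n}" "j \<in> {1..n}" "i + 2 \<le> j \<or> j + 2 \<le> i"
  shows "E i * E j = E j * E i"
proof -
  have ne: "i \<noteq> j" using assms by auto
  have c: "cartan i j = 0" using assms cartan_far by blast
  have "(\<Sum>r = 0..(1::nat). of_k ((-1) ^ r) *
            dpow of_k (qi q i) (E i) (1 - r) * E j * dpow of_k (qi q i) (E i) r) = 0"
    using SerreE[OF assms(1,2) ne] c by simp
  thus ?thesis by (simp add: dpow0 dpow1')
qed

lemmas lT = bspec[OF lusztig[unfolded lusztig_T_def]]
lemma T_add: "i \<in> {1..n} \<Longrightarrow> T i (x + y) = T i x + T i y" using lT[THEN conjunct1] by blast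
lemma T_mult: "i \<in> {1..n} \<Longrightarrow> T i (x * y) = T i x * T i y" using lT[THEN conjunct2, THEN conjunct1] by blast
lemma T_one: "i \<in> {1..n} \<Longrightarrow> T i 1 = 1" using lT[THEN conjunct2, THEN conjunct2, THEN conjunct1] by blast
lemma T_ok: "i \<in> {1..n} \<Longrightarrow> T i (of_k c) = of_k c" using lT[THEN conjunct2, THEN conjunct2, THEN conjunct2, THEN conjunct1] by blast
lemma T_K: "i \<in> {1..n} \<Longrightarrow> j \<in> {1..n} \<Longrightarrow> T i (K j) = K j * Kpow K Kinv i (- cartan i j)" using lT[THEN conjunct2, THEN conjunct2, THEN conjunct2, THEN conjunct2, THEN conjunct1] by blast
lemma T_Ei: "i \<in> {1..n} \<Longrightarrow> T i (E i) = - (F i * Kinv i)" using lT[THEN conjunct2, THEN conjunct2, THEN conjunct2, THEN conjunct2, THEN conjunct2, THEN conjunct1] by blast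
lemma T_Fi: "i \<in> {1..n} \<Longrightarrow> T i (F i) = - (K i * E i)" using lT[THEN conjunct2, THEN conjunct2, THEN conjunct2, THEN conjunct2, THEN conjunct2, THEN conjunct2, THEN conjunct1] by blast
lemma T_Ej: "i \<in> {1..n} \<Longrightarrow> j\<in>{1..n} \<Longrightarrow> j \<noteq> i \<Longrightarrow>
          T i (E j) = (\<Sum>r = 0..nat (- cartan i j). of_k ((-1) ^ r * qi q i ^ r) *
              dpow of_k (qi q i) (E i) (nat (- cartan i j) - r) * E j * dpow of_k (qi q i) (E i) r)"
  using lT[THEN conjunct2, THEN conjunct2, THEN conjunct2, THEN conjunct2, THEN conjunct2, THEN conjunct2, THEN conjunct2, THEN conjunct1] by blast

lemma T_0: "i \<in> {1..n} \<Longrightarrow> T i 0 = 0"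
  using T_add[of i 0 0] by simp
lemma T_uminus: "i \<in> {1..n} \<Longrightarrow> T i (- x) = - T i x"
  using T_add[of i x "-x"] T_0 by (simp add: eq_neg_iff_add_eq_0 add.commute)
lemma T_diff: "i \<in> {1..n} \<Longrightarrow> T i (x - y) = T i x - T i y"
  using T_add[of i x "-y"] T_uminus by simp
lemma T_S: "i \<in> {1..n} \<Longrightarrow> T i (S c x) = S c (T i x)"
  by (simp add: S_def T_mult T_ok)
lemma T_Q: "i \<in> {1..n} \<Longrightarrow> T i (Q v x y) = Q v (T i x) (T i y)"
  by (simp add: Q_def T_diff T_mult T_S)

lemma TE_far: assumes "i \<in> {1..n}" "j \<in> {1..n}" "i + 2 \<le> j \<or> j + 2 \<le> i"
  shows "T i (E j) = E j"
proof -
  have ne: "j \<noteq> i" using assms by auto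
  have c: "cartan i j = 0" using assms cartan_far by blast
  show ?thesis using T_Ej[OF assms(1,2) ne] c by (simp add: dpow0)
qed

lemma TE_adj: assumes "i \<in> {1..n}" "j \<in> {1..n}" "cartan i j = -1" "i \<noteq> j"
  shows "T i (E j) = Q (qi q i) (E i) (E j)"
proof -
  have "T i (E j) = (\<Sum>r = 0..(1::nat). of_k ((-1) ^ r * qi q i ^ r) *
              dpow of_k (qi q i) (E i) (1 - r) * E j * dpow of_k (qi q i) (E i) r)"
    using T_Ej[OF assms(1,2)] assms by simp
  thus ?thesis by (simp add: dpow0 dpow1' Q_def S_def mult.assoc)
qed

end

context uq begin

lemma powi_inv: "x \<noteq> (0::'k) \<Longrightarrow> x powi (-1) = inverse x" by (simp add: power_int_minus)

lemma KE: assumes "i \<in> {1..n}" "j \<in> {1..n}"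
  shows "K i * E j = S (qi q i powi cartan i j) (E j * K i)"
proof -
  have "K i * E j = K i * E j * (Kinv i * K i)" using KinvK[OF assms(1)] by simp
  also have "\<dots> = (K i * E j * Kinv i) * K i" by (simp add: mult.assoc)
  finally show ?thesis using KEK[OF assms] by simp
qed

lemma KinvE: assumes "i \<in> {1..n}" "j \<in> {1..n}"
  shows "Kinv i * E j = S (inverse (qi q i powi cartan i j)) (E j * Kinv i)"
proof -
  let ?c = "qi q i powi cartan i j"
  have cnz: "?c \<noteq> 0" using qi_nz by simp
  have "E j = Kinv i * (K i * E j)" using KinvK[OF assms(1)] by (simp add: mult.assoc[symmetric])
  also have "\<dots> = S ?c (Kinv i * E j * K i)" using KE[OF assms] by (simp add: mult.assoc)
  finally have e1: "E j = S ?c (Kinv i * E j * K i)" .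
  have "Kinv i * E j * K i = S (inverse ?c) (E j)"
    using arg_cong[OF e1, of "S (inverse ?c)"] cnz by simp
  hence "Kinv i * E j * K i * Kinv i = S (inverse ?c) (E j * Kinv i)" by simp
  thus ?thesis using KKinv[OF assms(1)] by (simp add: mult.assoc)
qed

lemma EF_ne: "a \<in> {1..n} \<Longrightarrow> b \<in> {1..n} \<Longrightarrow> a \<noteq> b \<Longrightarrow> E b * F a = F a * E b"
  using EF[of b a] by simp
lemma EF_eq: "a \<in> {1..n} \<Longrightarrow> E a * F a = F a * E a + S (inverse (qi q a - inverse (qi q a))) (K a - Kinv a)"
  using EF[of a a] by (simp add: algebra_simps)

lemma A2: assumes a: "a \<in> {1..n}" and b: "b \<in> {1..n}" and c: "cartan a b = -1" and ne: "a \<noteq> b"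
  shows "T a (Q (qi q a) (E b) (E a)) = E b"
proof -
  define v where "v = qi q a"
  define d where "d = inverse (v - inverse v)"
  define X where "X = Q v (E a) (E b)"
  have vnz: "v \<noteq> 0" unfolding v_def using qi_nz .
  have vd: "v - inverse v \<noteq> 0" unfolding v_def using qi_d .
  have f1: "E b * F a = F a * E b" using EF_ne[OF a b ne] .
  have f2: "E a * F a = F a * E a + S d (K a) - S d (Kinv a)"
    using EF_eq[OF a] by (simp add: d_def v_def)
  have kb: "K a * E b = S (inverse v) (E b * K a)" using KE[OF a b] c vnz by (simp add: v_def powi_inv)
  have kib: "Kinv a * E b = S v (E b * Kinv a)" using KinvE[OF a b] c vnz by (simp add: v_def powi_inv)
  have kia: "Kinv a * E a = S (inverse (v*v)) (E a * Kinv a)" using KinvE[OF a a] by (simp add: v_def cartan_diag power2_eq_square)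
  have TX: "T a (E b) = X" using TE_adj[OF a b c ne] by (simp add: X_def v_def[symmetric])
  have kia': "Kinv a * (E a * z) = S (inverse (v*v)) (E a * (Kinv a * z))" for z
    using kia by (metis S_ml mult.assoc)
  have kib': "Kinv a * (E b * z) = S v (E b * (Kinv a * z))" for z
    using kib by (metis S_ml mult.assoc)
  have kb': "K a * (E b * z) = S (inverse v) (E b * (K a * z))" for z
    using kb by (metis S_ml mult.assoc)
  have f1': "E b * (F a * z) = F a * (E b * z)" for z
    using f1 by (metis mult.assoc)
  have f2': "E a * (F a * z) = F a * (E a * z) + S d (K a * z) - S d (Kinv a * z)" for z
    using f2 by (metis S_ml mult.assoc distrib_right left_diff_distrib)
  have KiX: "Kinv a * X = S (inverse v) (X * Kinv a)"
  proof -
    have "Kinv a * X = S (inverse (v*v) * v) (E a * (E b * Kinv a)) - S (v * v * inverse (v*v)) (E b * (E a * Kinv a))"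
      by (simp add: X_def Q_def algebra_simps kia' kib' kia kib mult_ac)
    also have "\<dots> = S (inverse v) (E a * (E b * Kinv a)) - E b * (E a * Kinv a)"
      using vnz by (simp add: field_simps)
    also have "\<dots> = S (inverse v) (X * Kinv a)"
      using vnz by (simp add: X_def Q_def algebra_simps)
    finally show ?thesis .
  qed
  have XF: "X * F a - F a * X = - (E b * K a)"
  proof -
    have "X * F a - F a * X = S (d * inverse v) (E b * K a) - S (v * d) (E b * K a)"
      unfolding X_def Q_def by (simp add: algebra_simps f1' f2' kb' kib' f1 f2 kb kib mult_ac)
    also have "\<dots> = S (d * inverse v - v * d) (E b * K a)"
      by (simp add: S_diffk)
    also have "d * inverse v - v * d = -1"
      using vd vnz unfolding d_def by (simp add: field_simps)
    finally show ?thesis by (simp add: S_neg1)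
  qed
  have "T a (Q v (E b) (E a)) = Q v X (- (F a * Kinv a))"
    using T_Q[OF a] TX T_Ei[OF a] by simp
  also have "\<dots> = S v (F a * (Kinv a * X)) - X * (F a * Kinv a)"
    unfolding Q_def by (simp add: algebra_simps)
  also have "\<dots> = F a * (X * Kinv a) - X * (F a * Kinv a)"
    using vnz by (simp add: KiX)
  also have "\<dots> = - (X * F a - F a * X) * Kinv a" by (simp add: algebra_simps)
  also have "\<dots> = E b" using XF KKinv[OF a] by (simp add: mult.assoc)
  finally show ?thesis by (simp add: v_def)
qed

end

declare One_nat_def [simp del]
context uq begin

lemma S_negk[simp]: "S (- c) x = - S c x" by (simp add: S_def)

definition wt :: "'a \<Rightarrow> 'a \<Rightarrow> 'k \<Rightarrow> bool" where "wt z x c \<longleftrightarrow> z * x = S c (x * z)"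

lemma wt_mult: "wt z x a \<Longrightarrow> wt z y b \<Longrightarrow> wt z (x * y) (a * b)"
  unfolding wt_def by (metis S_S S_ml S_mr mult.assoc mult.commute)
lemma wt_diff: "wt z x a \<Longrightarrow> wt z y a \<Longrightarrow> wt z (x - y) a"
  unfolding wt_def by (simp add: algebra_simps)
lemma wt_S: "wt z x a \<Longrightarrow> wt z (S c x) a"
  unfolding wt_def by (simp add: mult.commute)
lemma wt_Q: assumes "wt z x a" "wt z y b" shows "wt z (Q v x y) (a * b)"
proof -
  have 1: "wt z (x * y) (a * b)" using assms by (rule wt_mult)
  have "wt z (y * x) (b * a)" using assms(2,1) by (rule wt_mult)
  hence 2: "wt z (S v (y * x)) (a * b)" by (simp add: wt_S mult.commute)
  show ?thesis unfolding Q_def using 1 2 by (rule wt_diff)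
qed
lemma wt_cong: "wt z x a \<Longrightarrow> a = b \<Longrightarrow> wt z x b" by simp

lemma wtKE: "i \<in> {1..n} \<Longrightarrow> j \<in> {1..n} \<Longrightarrow> wt (K i) (E j) (qi q i powi cartan i j)"
  unfolding wt_def by (rule KE)
lemma wtKiE: "i \<in> {1..n} \<Longrightarrow> j \<in> {1..n} \<Longrightarrow> wt (Kinv i) (E j) (inverse (qi q i powi cartan i j))"
  unfolding wt_def by (rule KinvE)

definition cm :: "nat \<Rightarrow> 'a \<Rightarrow> 'a" where "cm a x = x * F a - F a * x"
lemma cm_mult: "cm a (x * y) = x * cm a y + cm a x * y"
  unfolding cm_def by (simp add: algebra_simps)
lemma cm_diff: "cm a (x - y) = cm a x - cm a y" unfolding cm_def by (simp add: algebra_simps)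
lemma cm_S: "cm a (S c x) = S c (cm a x)" unfolding cm_def by simp
lemma cm_Q: "cm a (Q v x y) = x * cm a y + cm a x * y - S v (y * cm a x + cm a y * x)"
  unfolding Q_def by (simp add: cm_diff cm_S cm_mult)
lemma cm_E_ne: "a \<in> {1..n} \<Longrightarrow> b \<in> {1..n} \<Longrightarrow> a \<noteq> b \<Longrightarrow> cm a (E b) = 0"
  unfolding cm_def using EF_ne by simp
lemma cm_E_eq: "a \<in> {1..n} \<Longrightarrow> cm a (E a) = S (inverse (qi q a - inverse (qi q a))) (K a - Kinv a)"
  unfolding cm_def using EF[of a a] by simp

lemma qnum2: "qnum q 2 = q + inverse q"
proof -
  have qd: "q - inverse q \<noteq> 0" using qi_d[of 2] by (simp add: qi_def)
  have "q^2 - inverse q ^ 2 = (q - inverse q) * (q + inverse q)" by algebra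
  thus ?thesis using qd by (simp add: qnum_def)
qed
lemma q2nz: "q + inverse q \<noteq> 0"
proof
  assume "q + inverse q = 0"
  hence "q * (q + inverse q) = 0" by simp
  hence "1 + q * q = 0" using q_nz by (simp add: algebra_simps)
  hence h: "q * q = -1" by (simp add: eq_neg_iff_add_eq_0 add.commute)
  have "q^4 = (q*q)*(q*q)" by algebra
  hence "q^4 = 1" using h by simp
  thus False using q4_ne1 by simp
qed

lemma one_in: "1 \<in> {1..n}" and two_in: "2 \<in> {1..n}" using n_ge by auto

lemma qfact2: "qfact q 2 = q + inverse q"
proof -
  have e: "{1..2::nat} = {1,2}" by auto
  have "qfact q 2 = qnum q 1 * qnum q 2" unfolding qfact_def e by simp
  thus ?thesis using qnum1[of 2] qnum2 by (simp add: qi_def)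
qed

lemma TE21: "T 2 (E 1) = S (inverse (qnum q 2)) (Q 1 (E 2) (Q (q^2) (E 2) (E 1)))"
proof -
  define t where "t = inverse (q + inverse q)"
  have dp2: "dpow of_k q x 2 = S t (x * x)" for x
    by (simp add: dpow_def qfact2 t_def S_def power2_eq_square)
  have q2: "qi q 2 = q" by (simp add: qi_def)
  have dp2': "dpow of_k q x (Suc (Suc 0)) = S t (x * x)" for x
    using dp2 by (simp add: numeral_2_eq_2)
  have "T 2 (E 1) = (\<Sum>r = 0..(2::nat). of_k ((-1) ^ r * q ^ r) *
              dpow of_k q (E 2) (2 - r) * E 1 * dpow of_k q (E 2) r)"
    using T_Ej[OF two_in one_in] by (simp add: cartan_def q2)
  also have "\<dots> = S t (E 2 * (E 2 * E 1)) - S q (E 2 * (E 1 * E 2)) + S (q^2 * t) (E 1 * (E 2 * E 2))"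
    by (simp add: numeral_2_eq_2 dp2' dpow0 dpow1'[of 2, unfolded q2] S_def[symmetric] S_ok S_ok2
       mult.assoc power2_eq_square)
  also have "S q (E 2 * (E 1 * E 2)) = S (t * q^2) (E 2 * (E 1 * E 2)) + S t (E 2 * (E 1 * E 2))"
  proof -
    have h1: "(q + inverse q) * q = q^2 + 1" using q_nz by (simp add: algebra_simps power2_eq_square)
    have h2: "t * (q + inverse q) = 1" unfolding t_def using q2nz by simp
    have "t * q^2 + t = t * (q^2 + 1)" by (simp add: algebra_simps)
    also have "\<dots> = t * ((q + inverse q) * q)" by (simp only: h1)
    also have "\<dots> = q" using h2 by (simp add: mult.assoc[symmetric])
    finally have "q = t * q^2 + t" by simp
    thus ?thesis by (simp add: S_addk)
  qed
  finally show ?thesis unfolding qnum2 t_def[symmetric] Q_def by (simp add: algebra_simps mult_ac)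
qed


definition dd where "dd = inverse (q - inverse q)"
definition Y where "Y = Q (q^2) (E 2) (E 1)"

lemma qd: "q - inverse q \<noteq> 0" using qi_d[of 2] by (simp add: qi_def)

lemma cm22: "cm 2 (E 2) = S dd (K 2 - Kinv 2)"
  using cm_E_eq[OF two_in] by (simp add: qi_def dd_def)
lemma cm21: "cm 2 (E 1) = 0" using cm_E_ne[OF two_in one_in] by simp

lemma c21: "qi q 2 powi cartan 2 1 = inverse (q^2)" by (simp add: qi_ge2 cartan_21 power_int_minus)
lemma c21i: "inverse (qi q 2 powi cartan 2 1) = q^2" by (simp add: qi_ge2 cartan_21 power_int_minus)
lemma K2E1: "K 2 * E 1 = S (inverse (q^2)) (E 1 * K 2)"
  using KE[OF two_in one_in, unfolded c21] .
lemma Ki2E1: "Kinv 2 * E 1 = S (q^2) (E 1 * Kinv 2)"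
  using KinvE[OF two_in one_in, unfolded c21i] .
lemma K2E2: "K 2 * E 2 = S (q^2) (E 2 * K 2)"
  using KE[OF two_in two_in] by (simp add: qi_ge2 cartan_diag)
lemma Ki2E2: "Kinv 2 * E 2 = S (inverse (q^2)) (E 2 * Kinv 2)"
  using KinvE[OF two_in two_in] by (simp add: qi_ge2 cartan_diag)

lemma cmY: "cm 2 Y = - S (q + inverse q) (E 1 * K 2)"
proof -
  have "cm 2 Y = S dd (K 2 * E 1) - S dd (Kinv 2 * E 1) - S (q^2) (S dd (E 1 * K 2) - S dd (E 1 * Kinv 2))"
    unfolding Y_def cm_Q cm22 cm21 by (simp add: algebra_simps)
  also have "\<dots> = S (dd * inverse (q^2) - q^2 * dd) (E 1 * K 2)"
    by (simp add: K2E1 Ki2E1 S_diffk[symmetric] mult_ac)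
  also have "dd * inverse (q^2) - q^2 * dd = - (q + inverse q)"
  proof -
    have "inverse (q^2) - q^2 = - ((q - inverse q) * (q + inverse q))"
      using q_nz by (simp add: algebra_simps power2_eq_square)
    hence "dd * (inverse (q^2) - q^2) = - (q + inverse q)"
      unfolding dd_def using qd by (simp add: mult.assoc[symmetric])
    thus ?thesis by (simp add: algebra_simps)
  qed
  finally show ?thesis using S_negk[of "q + inverse q" "E 1 * K 2"] by simp
qed

lemma wtK2Y: "wt (K 2) Y 1"
proof -
  have "wt (K 2) Y (q^2 * inverse (q^2))" unfolding Y_def
    by (rule wt_Q) (simp_all add: wt_def K2E1 K2E2)
  thus ?thesis using q_nz by simp
qed
lemma wtKi2Y: "wt (Kinv 2) Y 1"
proof -
  have "wt (Kinv 2) Y (inverse (q^2) * q^2)" unfolding Y_def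
    by (rule wt_Q) (simp_all add: wt_def Ki2E1 Ki2E2)
  thus ?thesis using q_nz by simp
qed

lemma K2Ki2: "K 2 * Kinv 2 = 1" using KKinv[OF two_in] .

lemma B1: "T 2 (Q (q^2) (E 1) (E 2)) = Y"
proof -
  define t where "t = inverse (q + inverse q)"
  define C where "C = S t (Q 1 (E 2) Y)"
  have TC: "T 2 (E 1) = C" unfolding C_def t_def Y_def using TE21 qnum2 by simp
  have wC: "wt (Kinv 2) C (inverse (q^2))"
  proof -
    have "wt (Kinv 2) (Q 1 (E 2) Y) (inverse (q^2) * 1)"
      by (rule wt_Q) (simp_all add: wt_def Ki2E2 wtKi2Y[unfolded wt_def])
    thus ?thesis unfolding C_def by (simp add: wt_S)
  qed
  have KY: "K 2 * Y = Y * K 2" using wtK2Y by (simp add: wt_def)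
  have KiY: "Kinv 2 * Y = Y * Kinv 2" using wtKi2Y by (simp add: wt_def)
  have c1: "cm 2 (E 2) * Y - Y * cm 2 (E 2) = 0"
    unfolding cm22 by (simp add: algebra_simps mult.assoc[symmetric] KY KiY)
  have c2: "E 2 * cm 2 Y - cm 2 Y * E 2 = - S (q + inverse q) (Y * K 2)"
    unfolding cmY by (simp add: Y_def Q_def algebra_simps K2E2)
  have cmC: "cm 2 C = - (Y * K 2)"
  proof -
    have "cm 2 C = S t (E 2 * cm 2 Y - cm 2 Y * E 2 + (cm 2 (E 2) * Y - Y * cm 2 (E 2)))"
      unfolding C_def cm_S cm_Q by (simp add: algebra_simps)
    also have "\<dots> = S (t * (q + inverse q)) (- (Y * K 2))" by (simp add: c1 c2)
    also have "t * (q + inverse q) = 1" unfolding t_def using q2nz by simp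
    finally show ?thesis by simp
  qed
  have "T 2 (Q (q^2) (E 1) (E 2)) = Q (q^2) C (- (F 2 * Kinv 2))"
    using T_Q[OF two_in] TC T_Ei[OF two_in] by simp
  also have "\<dots> = S (q^2) (F 2 * (Kinv 2 * C)) - C * (F 2 * Kinv 2)"
    by (simp add: Q_def algebra_simps)
  also have "\<dots> = F 2 * (C * Kinv 2) - C * (F 2 * Kinv 2)"
    using wC q_nz by (simp add: wt_def)
  also have "\<dots> = - (cm 2 C * Kinv 2)" by (simp add: cm_def algebra_simps)
  also have "\<dots> = Y" by (simp add: cmC mult.assoc K2Ki2)
  finally show ?thesis .
qed

lemma B2: "T 2 (Q 1 (Q (q^2) (E 1) (E 2)) (E 2)) = S (q + inverse q) (E 1)"
proof -
  have TY: "T 2 (Q (q^2) (E 1) (E 2)) = Y" by (rule B1)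
  have "T 2 (Q 1 (Q (q^2) (E 1) (E 2)) (E 2)) = Q 1 Y (- (F 2 * Kinv 2))"
    using T_Q[OF two_in] TY T_Ei[OF two_in] by simp
  also have "\<dots> = F 2 * (Kinv 2 * Y) - Y * (F 2 * Kinv 2)"
    by (simp add: Q_def algebra_simps)
  also have "\<dots> = - (cm 2 Y * Kinv 2)"
    using wtKi2Y by (simp add: wt_def cm_def algebra_simps)
  also have "\<dots> = S (q + inverse q) (E 1)"
    by (simp add: cmY mult.assoc K2Ki2)
  finally show ?thesis .
qed

end

declare One_nat_def [simp del]
context uq begin

definition Tw :: "nat list \<Rightarrow> 'a \<Rightarrow> 'a" where "Tw w x = foldr T w x"
lemma Tw_Nil[simp]: "Tw [] x = x" by (simp add: Tw_def)
lemma Tw_Cons[simp]: "Tw (i # w) x = T i (Tw w x)" by (simp add: Tw_def)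
lemma Tw_append: "Tw (u @ w) x = Tw u (Tw w x)" by (simp add: Tw_def)

lemma Tw_fix: "(\<And>k. k \<in> set w \<Longrightarrow> T k x = x) \<Longrightarrow> Tw w x = x"
  by (induct w) auto

definition okw :: "nat list \<Rightarrow> bool" where "okw w \<longleftrightarrow> set w \<subseteq> {1..n}"
lemma okw_Cons[simp]: "okw (i # w) \<longleftrightarrow> i \<in> {1..n} \<and> okw w" by (auto simp: okw_def)
lemma okw_Nil[simp]: "okw []" by (simp add: okw_def)
lemma okw_append[simp]: "okw (u @ w) \<longleftrightarrow> okw u \<and> okw w" by (auto simp: okw_def)

lemma Tw_mult: "okw w \<Longrightarrow> Tw w (x * y) = Tw w x * Tw w y"
  by (induct w) (auto simp: T_mult)
lemma Tw_diff: "okw w \<Longrightarrow> Tw w (x - y) = Tw w x - Tw w y"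
  by (induct w) (auto simp: T_diff)
lemma Tw_uminus: "okw w \<Longrightarrow> Tw w (- x) = - Tw w x"
  by (induct w) (auto simp: T_uminus)
lemma Tw_S: "okw w \<Longrightarrow> Tw w (S c x) = S c (Tw w x)"
  by (induct w) (auto simp: T_S)
lemma Tw_Q: "okw w \<Longrightarrow> Tw w (Q v x y) = Q v (Tw w x) (Tw w y)"
  by (simp add: Q_def Tw_diff Tw_mult Tw_S)

lemma Tw_upt: "a \<le> b \<Longrightarrow> Tw [a..<Suc b] x = Tw [a..<b] (T b x)"
  by (simp add: Tw_append)
lemma Tw_rev_upt: "a \<le> b \<Longrightarrow> Tw (rev [a..<Suc b]) x = T b (Tw (rev [a..<b]) x)"
  by simp

lemma okw_upt: "1 \<le> a \<Longrightarrow> b \<le> n + 1 \<Longrightarrow> okw [a..<b]" by (auto simp: okw_def)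
lemma okw_rev: "okw (rev w) = okw w" by (simp add: okw_def)

definition cmt :: "'a \<Rightarrow> 'a \<Rightarrow> bool" where "cmt x y \<longleftrightarrow> x * y = y * x"
lemma cmt_mult: assumes "cmt x A" "cmt x B" shows "cmt x (A * B)"
proof -
  have "x * (A * B) = A * (x * B)" using assms unfolding cmt_def by (metis mult.assoc)
  also have "\<dots> = A * B * x" using assms unfolding cmt_def by (metis mult.assoc)
  finally show ?thesis unfolding cmt_def .
qed
lemma cmt_S: "cmt x A \<Longrightarrow> cmt x (S c A)" unfolding cmt_def by simp
lemma cmt_diff: "cmt x A \<Longrightarrow> cmt x B \<Longrightarrow> cmt x (A - B)" unfolding cmt_def by (simp add: algebra_simps)
lemma cmt_Q: "cmt x A \<Longrightarrow> cmt x B \<Longrightarrow> cmt x (Q v A B)"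
  unfolding Q_def by (intro cmt_diff cmt_S cmt_mult)

lemma J1': "cmt A C \<Longrightarrow> Q v (Q u A B) C = Q u A (Q v B C)" unfolding cmt_def by (rule J1)
lemma J2: assumes "cmt A B" shows "Q u A (Q v B C) = Q v B (Q u A C)"
proof -
  have "Q u A (Q v B C) = A*B*C - S v (A*C*B) - S u (B*C*A) + S (u*v) (C*B*A)"
    unfolding Q_def by (simp add: algebra_simps)
  also have "\<dots> = B*A*C - S v (A*C*B) - S u (B*C*A) + S (u*v) (C*A*B)"
  proof -
    have m1: "A*B*C = B*A*C" using assms by (simp add: cmt_def)
    have m2: "C*B*A = C*A*B" using assms by (simp add: cmt_def mult.assoc)
    show ?thesis by (simp only: m1 m2)
  qed
  also have "\<dots> = Q v B (Q u A C)"
    unfolding Q_def by (simp add: algebra_simps mult.commute)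
  finally show ?thesis .
qed
lemma J3: assumes "cmt B C" shows "Q u (Q v A B) C = Q v (Q u A C) B"
proof -
  have "Q u (Q v A B) C = A*B*C - S v (B*A*C) - S u (C*A*B) + S (u*v) (C*B*A)"
    unfolding Q_def by (simp add: algebra_simps)
  also have "\<dots> = A*C*B - S v (B*A*C) - S u (C*A*B) + S (u*v) (B*C*A)"
  proof -
    have m1: "A*B*C = A*C*B" using assms by (simp add: cmt_def mult.assoc)
    have m2: "C*B*A = B*C*A" using assms by (simp add: cmt_def)
    show ?thesis by (simp only: m1 m2)
  qed
  also have "\<dots> = Q v (Q u A C) B"
    unfolding Q_def by (simp add: algebra_simps mult.commute)
  finally show ?thesis .
qed

end

declare One_nat_def [simp del]
context uq begin

lemma cmt_sym: "cmt x y \<Longrightarrow> cmt y x" by (simp add: cmt_def)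
lemma cmtE: "i \<in> {1..n} \<Longrightarrow> j \<in> {1..n} \<Longrightarrow> i + 2 \<le> j \<or> j + 2 \<le> i \<Longrightarrow> cmt (E i) (E j)"
  unfolding cmt_def by (rule E_comm)

fun R :: "nat \<Rightarrow> nat \<Rightarrow> 'a" where
  "R a b = (if a \<le> b then E a else Q q (E a) (R (a - 1) b))"
declare R.simps [simp del]

lemma R_base: "R b b = E b" by (simp add: R.simps)
lemma R_step: "b < a \<Longrightarrow> R a b = Q q (E a) (R (a - 1) b)" by (subst R.simps) simp

lemma R_gen: assumes "\<And>k. b \<le> k \<Longrightarrow> k \<le> a \<Longrightarrow> P (E k)"
  and "\<And>v x y. P x \<Longrightarrow> P y \<Longrightarrow> P (Q v x y)" and "b \<le> a"
  shows "P (R a b)"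
  using assms
proof (induction a arbitrary: b rule: less_induct)
  case (less a)
  show ?case
  proof (cases "a = b")
    case True thus ?thesis using less by (simp add: R_base)
  next
    case False
    hence "b < a" using less by simp
    thus ?thesis using less by (simp add: R_step)
  qed
qed

lemma R_cmt: "(\<And>k. b \<le> k \<Longrightarrow> k \<le> a \<Longrightarrow> cmt x (E k)) \<Longrightarrow> b \<le> a \<Longrightarrow> cmt x (R a b)"
  by (rule R_gen[where P="cmt x"]) (auto intro: cmt_Q)

lemma R_fixw: "okw w \<Longrightarrow> (\<And>k. b \<le> k \<Longrightarrow> k \<le> a \<Longrightarrow> Tw w (E k) = E k) \<Longrightarrow> b \<le> a \<Longrightarrow> Tw w (R a b) = R a b"
  by (rule R_gen[where P="\<lambda>x. Tw w x = x"]) (auto simp: Tw_Q)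

lemma R_fix: "i \<in> {1..n} \<Longrightarrow> (\<And>k. b \<le> k \<Longrightarrow> k \<le> a \<Longrightarrow> T i (E k) = E k) \<Longrightarrow> b \<le> a \<Longrightarrow> T i (R a b) = R a b"
  using R_fixw[of "[i]" b a] by simp

lemma R_right: assumes "1 \<le> b" "b < a" "a \<le> n" shows "R a b = Q q (R a (b+1)) (E b)"
  using assms
proof (induction a rule: less_induct)
  case (less a)
  show ?case
  proof (cases "a = b + 1")
    case True thus ?thesis by (simp add: R_step R_base)
  next
    case False
    hence ab: "b + 1 < a" using less by simp
    have "R a b = Q q (E a) (R (a-1) b)" using less by (simp add: R_step)
    also have "\<dots> = Q q (E a) (Q q (R (a-1) (b+1)) (E b))" using less ab by simp
    also have "\<dots> = Q q (Q q (E a) (R (a-1) (b+1))) (E b)"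
      using less ab by (intro J1'[symmetric] cmtE) auto
    also have "\<dots> = Q q (R a (b+1)) (E b)" using ab by (simp add: R_step)
    finally show ?thesis .
  qed
qed


lemma TEadj_up: "2 \<le> b \<Longrightarrow> b + 1 \<le> n \<Longrightarrow> T (b+1) (E b) = Q q (E (b+1)) (E b)"
  using TE_adj[of "b+1" b] by (simp add: cartan_def qi_ge2)
lemma TEadj_dn: "2 \<le> b \<Longrightarrow> b + 1 \<le> n \<Longrightarrow> T b (E (b+1)) = Q q (E b) (E (b+1))"
  using TE_adj[of b "b+1"] by (simp add: cartan_def qi_ge2)
lemma A2_up: "2 \<le> b \<Longrightarrow> b + 1 \<le> n \<Longrightarrow> T b (Q q (E (b+1)) (E b)) = E (b+1)"
  using A2[of b "b+1"] by (simp add: cartan_def qi_ge2)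
lemma A2_dn: "2 \<le> b \<Longrightarrow> b + 1 \<le> n \<Longrightarrow> T (b+1) (Q q (E b) (E (b+1))) = E b"
  using A2[of "b+1" b] by (simp add: cartan_def qi_ge2)
lemma TE_farx: "m \<in> {1..n} \<Longrightarrow> k \<in> {1..n} \<Longrightarrow> m + 2 \<le> k \<or> k + 2 \<le> m \<Longrightarrow> T m (E k) = E k"
  by (rule TE_far)

lemma R_far: "1 \<le> m \<Longrightarrow> m \<le> n \<Longrightarrow> 1 \<le> b \<Longrightarrow> b \<le> a \<Longrightarrow> a \<le> n \<Longrightarrow> m + 2 \<le> b \<or> a + 2 \<le> m \<Longrightarrow> T m (R a b) = R a b"
  by (rule R_fix) (auto intro!: TE_far)

lemma cmt_ER: "1 \<le> m \<Longrightarrow> m \<le> n \<Longrightarrow> 1 \<le> b \<Longrightarrow> b \<le> a \<Longrightarrow> a \<le> n \<Longrightarrow> m + 2 \<le> b \<or> a + 2 \<le> m \<Longrightarrow> cmt (E m) (R a b)"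
  by (rule R_cmt) (auto intro!: cmtE)
lemma cmt_RE: "1 \<le> m \<Longrightarrow> m \<le> n \<Longrightarrow> 1 \<le> b \<Longrightarrow> b \<le> a \<Longrightarrow> a \<le> n \<Longrightarrow> m + 2 \<le> b \<or> a + 2 \<le> m \<Longrightarrow> cmt (R a b) (E m)"
  by (rule cmt_sym, rule cmt_ER)

lemma R_a: assumes "2 \<le> b" "b \<le> a" "a + 1 \<le> n" shows "T (a+1) (R a b) = R (a+1) b"
proof (cases "a = b")
  case True thus ?thesis using assms by (simp add: R_base R_step TEadj_up)
next
  case False
  hence ba: "b < a" using assms by simp
  have "T (a+1) (R a b) = Q q (Q q (E (a+1)) (E a)) (R (a-1) b)"
    using assms ba by (simp add: R_step T_Q TEadj_up R_far)
  also have "\<dots> = Q q (E (a+1)) (Q q (E a) (R (a-1) b))"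
    using assms ba by (intro J1' cmt_ER) auto
  also have "\<dots> = R (a+1) b" using ba by (simp add: R_step)
  finally show ?thesis .
qed

lemma R_c: assumes "2 \<le> b" "b < a" "a \<le> n" shows "T b (R a b) = R a (b+1)"
proof (cases "a = b + 1")
  case True
  have "T b (R a b) = T b (Q q (E (b+1)) (E b))" using True by (simp add: R_step R_base)
  also have "\<dots> = E (b+1)" using assms True by (simp add: A2_up)
  finally show ?thesis using True by (simp add: R_base)
next
  case False
  hence ba: "b + 1 < a" using assms by simp
  have e: "b + 1 + 1 = b + 2" by arith
  have "R a b = Q q (Q q (R a (b+2)) (E (b+1))) (E b)"
    using assms ba R_right[of b a] R_right[of "b+1" a, unfolded e] by simp
  also have "\<dots> = Q q (R a (b+2)) (Q q (E (b+1)) (E b))"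
    using assms ba by (intro J1' cmt_RE) auto
  finally have eqR: "R a b = Q q (R a (b+2)) (Q q (E (b+1)) (E b))" .
  have bn: "b \<in> {1..n}" using assms by auto
  have "T b (R a b) = Q q (T b (R a (b+2))) (T b (Q q (E (b+1)) (E b)))"
    by (subst eqR) (simp only: T_Q[OF bn])
  also have "T b (R a (b+2)) = R a (b+2)" using assms ba by (intro R_far) auto
  also have "T b (Q q (E (b+1)) (E b)) = E (b+1)" using assms ba by (intro A2_up) auto
  finally show ?thesis using assms ba R_right[of "b+1" a, unfolded e] by simp
qed

lemma R_m: assumes "2 \<le> b" "b < m" "m < a" "a \<le> n" shows "T m (R a b) = R a b"
  using assms
proof (induction "m - 1 - b" arbitrary: b)
  case 0
  hence bm: "b = m - 1" by simp
  have m3: "3 \<le> m" using 0 by simp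
  have "R a b = Q q (R a m) (E (m-1))" using 0 bm R_right[of b a] by simp
  hence "T m (R a b) = Q q (R a (m+1)) (Q q (E m) (E (m-1)))"
    using 0 bm m3 R_c[of m a] TEadj_up[of "m-1"] by (simp add: T_Q)
  also have "\<dots> = Q q (Q q (R a (m+1)) (E m)) (E (m-1))"
    using 0 m3 by (intro J1'[symmetric] cmt_RE) auto
  also have "\<dots> = R a b" using 0 bm R_right[of m a] R_right[of b a] by simp
  finally show ?case .
next
  case (Suc d)
  have "R a b = Q q (R a (b+1)) (E b)" using Suc R_right[of b a] by simp
  moreover have "T m (R a (b+1)) = R a (b+1)" using Suc by simp
  moreover have "T m (E b) = E b" using Suc by (intro TE_far) auto
  ultimately show ?case using Suc by (simp add: T_Q)
qed

lemma R_e: assumes "3 \<le> b" "b \<le> a" "a \<le> n" shows "T (b-1) (R a b) = Q q (E (b-1)) (R a b)"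
proof (cases "a = b")
  case True thus ?thesis using assms TEadj_dn[of "b-1"] by (simp add: R_base)
next
  case False
  hence ba: "b < a" using assms by simp
  have f1: "T (b-1) (R a (b+1)) = R a (b+1)" using assms ba by (intro R_far) auto
  have f2: "T (b-1) (E b) = Q q (E (b-1)) (E b)" using assms TEadj_dn[of "b-1"] by simp
  have bn: "b - 1 \<in> {1..n}" using assms by auto
  have "T (b-1) (R a b) = Q q (R a (b+1)) (Q q (E (b-1)) (E b))"
    using assms ba R_right[of b a] by (simp add: T_Q[OF bn] f1 f2)
  also have "\<dots> = Q q (E (b-1)) (Q q (R a (b+1)) (E b))"
    using assms ba by (intro J2 cmt_RE) auto
  also have "\<dots> = Q q (E (b-1)) (R a b)" using assms ba R_right[of b a] by simp
  finally show ?thesis .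
qed

end

declare One_nat_def [simp del]
context uq begin

function Sa :: "nat \<Rightarrow> nat \<Rightarrow> 'a" where
  "Sa b a = (if a \<le> b then E b else Q q (E b) (Sa (Suc b) a))"
  by auto
termination by (relation "measure (\<lambda>(b,a). a - b)") auto
declare Sa.simps [simp del]

lemma Sa_base: "Sa b b = E b" by (simp add: Sa.simps)
lemma Sa_step: "b < a \<Longrightarrow> Sa b a = Q q (E b) (Sa (b+1) a)" by (subst Sa.simps) (simp add: Suc_eq_plus1)

lemma Sa_gen: assumes "\<And>k. b \<le> k \<Longrightarrow> k \<le> a \<Longrightarrow> P (E k)"
  and "\<And>v x y. P x \<Longrightarrow> P y \<Longrightarrow> P (Q v x y)" and "b \<le> a"
  shows "P (Sa b a)"
  using assms
proof (induction "a - b" arbitrary: b)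
  case 0 thus ?case by (simp add: Sa_base)
next
  case (Suc d)
  hence "b < a" by simp
  thus ?case using Suc by (simp add: Sa_step)
qed

lemma Sa_cmt: "(\<And>k. b \<le> k \<Longrightarrow> k \<le> a \<Longrightarrow> cmt x (E k)) \<Longrightarrow> b \<le> a \<Longrightarrow> cmt x (Sa b a)"
  by (rule Sa_gen[where P="cmt x"]) (auto intro: cmt_Q)
lemma Sa_fixw: "okw w \<Longrightarrow> (\<And>k. b \<le> k \<Longrightarrow> k \<le> a \<Longrightarrow> Tw w (E k) = E k) \<Longrightarrow> b \<le> a \<Longrightarrow> Tw w (Sa b a) = Sa b a"
  by (rule Sa_gen[where P="\<lambda>x. Tw w x = x"]) (auto simp: Tw_Q)
lemma Sa_fix: "i \<in> {1..n} \<Longrightarrow> (\<And>k. b \<le> k \<Longrightarrow> k \<le> a \<Longrightarrow> T i (E k) = E k) \<Longrightarrow> b \<le> a \<Longrightarrow> T i (Sa b a) = Sa b a"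
  using Sa_fixw[of "[i]" b a] by simp

lemma cmt_ES: "1 \<le> m \<Longrightarrow> m \<le> n \<Longrightarrow> 1 \<le> b \<Longrightarrow> b \<le> a \<Longrightarrow> a \<le> n \<Longrightarrow> m + 2 \<le> b \<or> a + 2 \<le> m \<Longrightarrow> cmt (E m) (Sa b a)"
  by (rule Sa_cmt) (auto intro!: cmtE)
lemma cmt_SE: "1 \<le> m \<Longrightarrow> m \<le> n \<Longrightarrow> 1 \<le> b \<Longrightarrow> b \<le> a \<Longrightarrow> a \<le> n \<Longrightarrow> m + 2 \<le> b \<or> a + 2 \<le> m \<Longrightarrow> cmt (Sa b a) (E m)"
  by (rule cmt_sym, rule cmt_ES)
lemma Sa_far: "1 \<le> m \<Longrightarrow> m \<le> n \<Longrightarrow> 1 \<le> b \<Longrightarrow> b \<le> a \<Longrightarrow> a \<le> n \<Longrightarrow> m + 2 \<le> b \<or> a + 2 \<le> m \<Longrightarrow> T m (Sa b a) = Sa b a"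
  by (rule Sa_fix) (auto intro!: TE_far)

lemma Sa_right: assumes "1 \<le> b" "b < a" "a \<le> n" shows "Sa b a = Q q (Sa b (a-1)) (E a)"
  using assms
proof (induction "a - b" arbitrary: b)
  case 0 thus ?case by simp
next
  case (Suc d)
  show ?case
  proof (cases "a = b + 1")
    case True thus ?thesis by (simp add: Sa_step Sa_base)
  next
    case False
    hence ab: "b + 1 < a" using Suc by simp
    have "Sa b a = Q q (E b) (Sa (b+1) a)" using Suc by (simp add: Sa_step)
    also have "\<dots> = Q q (E b) (Q q (Sa (b+1) (a-1)) (E a))" using Suc ab by simp
    also have "\<dots> = Q q (Q q (E b) (Sa (b+1) (a-1))) (E a)"
      using Suc ab by (intro J1'[symmetric] cmtE) auto
    also have "\<dots> = Q q (Sa b (a-1)) (E a)" using ab by (simp add: Sa_step)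
    finally show ?thesis .
  qed
qed

lemma S_a: assumes "3 \<le> b" "b \<le> a" "a \<le> n" shows "T (b-1) (Sa b a) = Sa (b-1) a"
proof (cases "a = b")
  case True thus ?thesis using assms TEadj_dn[of "b-1"] by (simp add: Sa_base Sa_step)
next
  case False
  hence ba: "b < a" using assms by simp
  have bn: "b - 1 \<in> {1..n}" using assms by auto
  have f1: "T (b-1) (Sa (b+1) a) = Sa (b+1) a" using assms ba by (intro Sa_far) auto
  have f2: "T (b-1) (E b) = Q q (E (b-1)) (E b)" using assms TEadj_dn[of "b-1"] by simp
  have "T (b-1) (Sa b a) = Q q (Q q (E (b-1)) (E b)) (Sa (b+1) a)"
    using ba by (simp add: Sa_step T_Q[OF bn] f1 f2)
  also have "\<dots> = Q q (E (b-1)) (Q q (E b) (Sa (b+1) a))"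
    using assms ba by (intro J1' cmt_ES) auto
  also have "\<dots> = Sa (b-1) a" using assms ba by (simp add: Sa_step)
  finally show ?thesis .
qed

lemma S_c: assumes "2 \<le> b" "b < a" "a \<le> n" shows "T a (Sa b a) = Sa b (a-1)"
proof (cases "a = b + 1")
  case True
  have "T a (Sa b a) = T (b+1) (Q q (E b) (E (b+1)))" using True by (simp add: Sa_step Sa_base)
  also have "\<dots> = E b" using assms True by (simp add: A2_dn)
  finally show ?thesis using True by (simp add: Sa_base)
next
  case False
  hence ba: "b + 1 < a" using assms by simp
  have an: "a \<in> {1..n}" using assms by auto
  have e: "a - 1 - 1 = a - 2" by arith
  have "Sa b a = Q q (Q q (Sa b (a-2)) (E (a-1))) (E a)"
    using assms ba Sa_right[of b a] Sa_right[of b "a-1", unfolded e] by simp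
  also have "\<dots> = Q q (Sa b (a-2)) (Q q (E (a-1)) (E a))"
    using assms ba by (intro J1' cmt_SE) auto
  finally have eqS: "Sa b a = Q q (Sa b (a-2)) (Q q (E (a-1)) (E a))" .
  have "T a (Sa b a) = Q q (T a (Sa b (a-2))) (T a (Q q (E (a-1)) (E a)))"
    by (subst eqS) (simp only: T_Q[OF an])
  also have "T a (Sa b (a-2)) = Sa b (a-2)" using assms ba by (intro Sa_far) auto
  also have "T a (Q q (E (a-1)) (E a)) = E (a-1)" using assms ba A2_dn[of "a-1"] by simp
  finally show ?thesis using assms ba Sa_right[of b "a-1", unfolded e] by simp
qed

lemma S_m: assumes "2 \<le> b" "b < m" "m < a" "a \<le> n" shows "T m (Sa b a) = Sa b a"
  using assms
proof (induction "m - 1 - b" arbitrary: b)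
  case 0
  hence bm: "b = m - 1" by simp
  have m3: "3 \<le> m" using 0 by simp
  have mn: "m \<in> {1..n}" using 0 by auto
  have "Sa b a = Q q (E (m-1)) (Q q (E m) (Sa (m+1) a))" using 0 bm by (simp add: Sa_step)
  also have "\<dots> = Q q (Q q (E (m-1)) (E m)) (Sa (m+1) a)"
    using 0 m3 by (intro J1'[symmetric] cmt_ES) auto
  finally have eqS: "Sa b a = Q q (Q q (E (m-1)) (E m)) (Sa (m+1) a)" .
  have "T m (Sa b a) = Q q (T m (Q q (E (m-1)) (E m))) (T m (Sa (m+1) a))"
    by (subst eqS) (simp only: T_Q[OF mn])
  also have "T m (Q q (E (m-1)) (E m)) = E (m-1)" using 0 m3 A2_dn[of "m-1"] by simp
  also have "T m (Sa (m+1) a) = Sa m a" using 0 m3 S_a[of "m+1" a] by simp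
  finally show ?case using 0 bm by (simp add: Sa_step)
next
  case (Suc d)
  have bn: "m \<in> {1..n}" using Suc by auto
  have "Sa b a = Q q (E b) (Sa (b+1) a)" using Suc by (simp add: Sa_step)
  moreover have "T m (Sa (b+1) a) = Sa (b+1) a" using Suc by simp
  moreover have "T m (E b) = E b" using Suc by (intro TE_far) auto
  ultimately show ?case using Suc by (simp add: T_Q[OF bn])
qed

end

declare One_nat_def [simp del]
lemma plus1_Suc[simp]: "(x::nat) + 1 = Suc x" by simp
context uq begin

lemma Tw_fix_upt: "(\<And>k. a \<le> k \<Longrightarrow> k < b \<Longrightarrow> T k x = x) \<Longrightarrow> Tw [a..<b] x = x"
  by (rule Tw_fix) auto
lemma Tw_fix_rev: "(\<And>k. a \<le> k \<Longrightarrow> k < b \<Longrightarrow> T k x = x) \<Longrightarrow> Tw (rev [a..<b]) x = x"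
  by (rule Tw_fix) auto

lemma upt_split: "a \<le> m \<Longrightarrow> m \<le> b \<Longrightarrow> [a..<b] = [a..<m] @ [m..<b]"
  by (metis le_Suc_ex upt_add_eq_append)
lemma rev_upt_split: "a \<le> m \<Longrightarrow> m \<le> b \<Longrightarrow> rev [a..<b] = rev [m..<b] @ rev [a..<m]"
  by (simp add: upt_split[of a m b])

lemma set_gamma: "k' \<in> set (gamma_word k) \<Longrightarrow> 1 \<le> k' \<and> k' \<le> max 1 k"
  by (auto simp: gamma_word_def)
lemma Gword_Suc: "Gword (Suc m) = Gword m @ gamma_word (Suc m)"
  by (simp add: Gword_def)
lemma set_Gword: "k \<in> set (Gword m) \<Longrightarrow> 1 \<le> k \<and> k \<le> m"
proof (induction m)
  case 0 thus ?case by (simp add: Gword_def)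
next
  case (Suc m) thus ?case using set_gamma[of k "Suc m"] by (auto simp: Gword_Suc)
qed
lemma okw_gamma: "k \<le> n \<Longrightarrow> okw (gamma_word k)" using n_ge set_gamma by (force simp: okw_def)
lemma okw_Gword: "m \<le> n \<Longrightarrow> okw (Gword m)" using set_Gword by (force simp: okw_def)
lemma gamma_split: "Tw (gamma_word k) x = Tw (rev [2..<k+1]) (T 1 (Tw [2..<k+1] x))"
  by (simp add: gamma_word_def Tw_append del: upt_Suc)
lemma gamma_split': "1 \<le> j \<Longrightarrow> Tw (gamma_word (j-1)) x = Tw (rev [2..<j]) (T 1 (Tw [2..<j] x))"
  using gamma_split[of "j-1" x] by (simp del: upt_Suc)

lemma Gword_fixE: assumes "m + 2 \<le> j" "j \<le> n" shows "Tw (Gword m) (E j) = E j"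
proof (rule Tw_fix)
  fix k assume "k \<in> set (Gword m)"
  hence "1 \<le> k" "k \<le> m" using set_Gword by auto
  thus "T k (E j) = E j" using assms by (intro TE_far) auto
qed

lemma L_lemma: assumes "1 \<le> i" "i + 2 \<le> j" "j \<le> n"
  shows "Tw (gamma_word (j-1)) (R j (i+1)) = Q q (R (j-1) (i+1)) (E j)"
proof -
  have j1: "j - 1 + 1 = j" using assms by simp
  have s1: "Tw [i+2..<j] (R j (i+1)) = R j (i+1)"
    using assms by (intro Tw_fix_upt R_m) auto
  have s2: "T (i+1) (R j (i+1)) = R j (i+2)" using assms R_c[of "i+1" j] by simp
  have s3: "Tw [2..<i+1] (R j (i+2)) = R j (i+2)" using assms by (intro Tw_fix_upt R_far) auto
  have A: "Tw [2..<j] (R j (i+1)) = R j (i+2)"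
  proof -
    have "[2..<j] = [2..<i+1] @ [i+1] @ [i+2..<j]" using assms
      by (metis Suc_eq_plus1 add_2_eq_Suc' append_Cons append_Nil le_add2 le_trans upt_conv_Cons upt_split
          less_add_Suc1 add.commute le_add_diff_inverse2 nat_add_left_cancel_le Suc_le_eq)
    thus ?thesis using s1 s2 s3 by (simp add: Tw_append)
  qed
  have B: "T 1 (R j (i+2)) = R j (i+2)" using assms by (intro R_far) auto
  have C0: "Tw (rev [2..<i+1]) (R j (i+2)) = R j (i+2)" using assms by (intro Tw_fix_rev R_far) auto
  have C: "Tw (rev [i+1..<m+1]) (R j (i+2)) = Q q (R m (i+1)) (R j (m+1))" if "i+1 \<le> m" "m \<le> j-1" for m
    using that
  proof (induction m)
    case 0 thus ?case by simp
  next
    case (Suc m)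
    show ?case
    proof (cases "m = i")
      case True
      have "T (i+1) (R j (i+2)) = Q q (E (i+1)) (R j (i+2))" using assms R_e[of "i+2" j] by simp
      thus ?thesis using True by (simp add: R_base)
    next
      case False
      hence m: "i + 1 \<le> m" using Suc by simp
      have "Tw (rev [i+1..<Suc m+1]) (R j (i+2)) = T (m+1) (Q q (R m (i+1)) (R j (m+1)))"
        using Suc m by simp
      also have "\<dots> = Q q (R (m+1) (i+1)) (R j (m+2))"
        using Suc m assms R_a[of "i+1" m] R_c[of "m+1" j] by (simp add: T_Q)
      finally show ?thesis by simp
    qed
  qed
  have "Tw (gamma_word (j-1)) (R j (i+1)) = Tw (rev [2..<j]) (R j (i+2))"
    using A B assms by (simp add: gamma_split' del: upt_Suc)
  also have "\<dots> = Tw (rev [i+1..<j]) (R j (i+2))"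
    using assms C0 rev_upt_split[of 2 "i+1" j] by (simp add: Tw_append)
  also have "\<dots> = Q q (R (j-1) (i+1)) (E j)"
    using C[of "j-1"] assms j1 by (simp add: R_base)
  finally show ?thesis .
qed


lemma upt_split3: "a \<le> m \<Longrightarrow> m < b \<Longrightarrow> [a..<b] = [a..<m] @ m # [Suc m..<b]"
  using upt_split[of a m b] upt_conv_Cons[of m b] by simp

lemma TE12: "T 1 (E 2) = Q (q^2) (E 1) (E 2)"
  using TE_adj[OF one_in two_in] by (simp add: cartan_def qi_def)
lemma A2_12: "T 1 (Q (q^2) (E 2) (E 1)) = E 2"
  using A2[OF one_in two_in] by (simp add: cartan_def qi_def)

lemma G_lemma: assumes "1 \<le> m" "m + 1 \<le> k" "k \<le> n"
  shows "Tw (gamma_word k) (E m) = E m"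
proof (cases "m = 1")
  case True
  define t where "t = inverse (q + inverse q)"
  have k2: "2 \<le> k" using assms True by simp
  have "Tw [2..<k+1] (E 1) = T 2 (Tw [3..<k+1] (E 1))"
    using k2 upt_conv_Cons[of 2 "k+1"] by (simp add: numeral_3_eq_3 del: upt_Suc)
  also have "Tw [3..<k+1] (E 1) = E 1" using assms by (intro Tw_fix_upt TE_far) auto
  also have "T 2 (E 1) = S t (Q 1 (E 2) Y)" using TE21 qnum2 by (simp add: t_def Y_def)
  finally have a1: "Tw [2..<k+1] (E 1) = S t (Q 1 (E 2) Y)" .
  have a2: "T 1 (S t (Q 1 (E 2) Y)) = S t (Q 1 (Q (q^2) (E 1) (E 2)) (E 2))"
    using one_in by (simp add: T_S T_Q TE12 Y_def A2_12)
  have a3: "T 2 (S t (Q 1 (Q (q^2) (E 1) (E 2)) (E 2))) = E 1"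
    using two_in B2 q2nz by (simp add: T_S t_def)
  have "Tw (rev [2..<k+1]) (S t (Q 1 (Q (q^2) (E 1) (E 2)) (E 2))) = Tw (rev [3..<k+1]) (E 1)"
  proof -
    have "[2..<k+1] = 2 # [3..<k+1]" using k2 upt_conv_Cons[of 2 "k+1"] by (simp add: numeral_3_eq_3 del: upt_Suc)
    hence "rev [2..<k+1] = rev [3..<k+1] @ [2]" by simp
    thus ?thesis using a3 by (simp add: Tw_append del: upt_Suc)
  qed
  also have "\<dots> = E 1" using assms by (intro Tw_fix_rev TE_far) auto
  finally show ?thesis using True a1 a2 by (simp add: gamma_split del: upt_Suc)
next
  case False
  hence m2: "2 \<le> m" using assms by simp
  have w1: "[2..<k+1] = [2..<m] @ m # (m+1) # [m+2..<k+1]"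
    using assms m2 upt_split3[of 2 m "k+1"] upt_conv_Cons[of "m+1" "k+1"] by simp
  have b1: "Tw [m+2..<k+1] (E m) = E m" using assms by (intro Tw_fix_upt TE_far) auto
  have b2: "T (m+1) (E m) = R (m+1) m" using assms m2 TEadj_up[of m] by (simp add: R_step R_base)
  have b3: "T m (R (m+1) m) = E (m+1)" using assms m2 R_c[of m "m+1"] by (simp add: R_base)
  have b4: "Tw [2..<m] (E (m+1)) = E (m+1)" using assms by (intro Tw_fix_upt TE_far) auto
  have A: "Tw [2..<k+1] (E m) = E (m+1)"
    unfolding w1 using b1 b2 b3 b4 by (simp add: Tw_append del: upt_Suc)
  have B: "T 1 (E (m+1)) = E (m+1)" using assms m2 by (intro TE_far) auto
  have c1: "Tw (rev [2..<m]) (E (m+1)) = E (m+1)" using assms by (intro Tw_fix_rev TE_far) auto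
  have c2: "T m (E (m+1)) = Q q (E m) (E (m+1))" using assms m2 TEadj_dn[of m] by simp
  have c3: "T (m+1) (Q q (E m) (E (m+1))) = E m" using assms m2 A2_dn[of m] by simp
  have c4: "Tw (rev [m+2..<k+1]) (E m) = E m" using assms by (intro Tw_fix_rev TE_far) auto
  have C: "Tw (rev [2..<k+1]) (E (m+1)) = E m"
    unfolding w1 using c1 c2 c3 c4 by (simp add: Tw_append del: upt_Suc)
  show ?thesis using A B C by (simp add: gamma_split del: upt_Suc)
qed

end

declare One_nat_def [simp del]
lemma Suc1[simp]: "Suc 1 = 2" by simp
context uq begin

lemma Sa_chain: assumes "1 \<le> i" "i + 1 \<le> n" "2 \<le> b" "b \<le> i + 1"
  shows "Tw [b..<i+1] (E (i+1)) = Sa b (i+1)"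
  using assms
proof (induction "i + 1 - b" arbitrary: b)
  case 0 hence "b = i + 1" by simp
  thus ?case by (simp add: Sa_base del: upt_Suc)
next
  case (Suc d)
  hence bi: "b < i + 1" by simp
  have "[b..<i+1] = b # [b+1..<i+1]" using bi upt_conv_Cons by simp
  hence "Tw [b..<i+1] (E (i+1)) = T b (Sa (b+1) (i+1))" using Suc by (simp del: upt_Suc)
  also have "\<dots> = Sa b (i+1)" using Suc bi S_a[of "b+1" "i+1"] by simp
  finally show ?case .
qed

definition Vv :: "nat \<Rightarrow> 'a" where "Vv i = T 1 (Tw [2..<i+1] (E (i+1)))"

lemma Vv1: "Vv 1 = Q (q^2) (E 1) (E 2)"
  unfolding Vv_def by (simp add: TE12)

lemma Vv2: assumes "2 \<le> i" "i + 1 \<le> n" shows "Vv i = Q q (Q (q^2) (E 1) (E 2)) (Sa 3 (i+1))"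
proof -
  have "Vv i = T 1 (Sa 2 (i+1))" unfolding Vv_def using assms Sa_chain[of i 2] by simp
  also have "Sa 2 (i+1) = Q q (E 2) (Sa 3 (i+1))" using assms Sa_step[of 2 "i+1"] by (simp add: numeral_3_eq_3)
  also have "T 1 (Q q (E 2) (Sa 3 (i+1))) = Q q (Q (q^2) (E 1) (E 2)) (Sa 3 (i+1))"
    using assms one_in by (simp add: T_Q TE12 Sa_far)
  finally show ?thesis .
qed

definition Ust :: "nat \<Rightarrow> nat \<Rightarrow> 'a" where
  "Ust i m = (if i = 1 then Q (q^2) (R m 2) (E 1)
              else Q q (Q (q^2) (R m 2) (E 1)) (if m \<le> i then Sa 2 (i+1) else Sa 2 i))"

lemma Ustate: assumes "1 \<le> i" "i + 1 \<le> n" "2 \<le> m" "m \<le> n"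
  shows "Tw (rev [2..<m+1]) (Vv i) = Ust i m"
  using assms
proof (induction m)
  case 0 thus ?case by simp
next
  case (Suc m)
  show ?case
  proof (cases "m = 1")
    case True
    have e: "rev [2..<Suc m + 1] = [2]" using True by (simp add: upt_rec)
    show ?thesis
    proof (cases "i = 1")
      case True
      thus ?thesis using `m = 1` by (simp add: e Vv1 B1[unfolded Y_def] Ust_def R_base)
    next
      case False
      hence i2: "2 \<le> i" using Suc by simp
      have "T 2 (Vv i) = Q q Y (Sa 2 (i+1))"
        using Suc i2 two_in Vv2[of i] B1 S_a[of 3 "i+1"] by (simp add: T_Q)
      thus ?thesis using `m = 1` False i2 by (simp add: e Y_def Ust_def R_base)
    qed
  next
    case False
    hence m2: "2 \<le> m" using Suc by simp
    have mn: "Suc m \<in> {1..n}" using Suc by simp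
    have IH: "Tw (rev [2..<m+1]) (Vv i) = Ust i m" using Suc m2 by simp
    have "Tw (rev [2..<Suc m+1]) (Vv i) = T (Suc m) (Ust i m)" using IH m2 by simp
    also have "\<dots> = Ust i (Suc m)"
    proof -
      have r: "T (Suc m) (Q (q^2) (R m 2) (E 1)) = Q (q^2) (R (Suc m) 2) (E 1)"
        using Suc m2 R_a[of 2 m] TE_far[of "Suc m" 1] mn by (simp add: T_Q)
      show ?thesis
      proof (cases "i = 1")
        case True thus ?thesis using r by (simp add: Ust_def)
      next
        case False
        hence i2: "2 \<le> i" using Suc by simp
        have s: "T (Suc m) (if m \<le> i then Sa 2 (i+1) else Sa 2 i) = (if Suc m \<le> i then Sa 2 (i+1) else Sa 2 i)"
        proof -
          consider "Suc m \<le> i" | "Suc m = i + 1" | "i + 2 \<le> Suc m" by linarith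
          thus ?thesis
          proof cases
            case 1 thus ?thesis using Suc m2 S_m[of 2 "Suc m" "i+1"] by simp
          next
            case 2 thus ?thesis using Suc m2 S_c[of 2 "i+1"] by simp
          next
            case 3 thus ?thesis using Suc m2 i2 Sa_far[of "Suc m" 2 i] by simp
          qed
        qed
        have u1: "Ust i m = Q q (Q (q^2) (R m 2) (E 1)) (if m \<le> i then Sa 2 (i+1) else Sa 2 i)"
          unfolding Ust_def by (rule if_not_P[OF False])
        have u2: "Ust i (Suc m) = Q q (Q (q^2) (R (Suc m) 2) (E 1)) (if Suc m \<le> i then Sa 2 (i+1) else Sa 2 i)"
          unfolding Ust_def by (rule if_not_P[OF False])
        show ?thesis by (simp only: u1 u2, subst T_Q[OF mn], simp only: r s)
      qed
    qed
    finally show ?thesis .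
  qed
qed


lemma UU_form: assumes "1 \<le> i" "i + 2 \<le> j" "j \<le> n"
  shows "Tw (rev [2..<j] @ [1] @ [2..<i+1]) (E (i+1)) = Ust i (j-1)"
proof -
  have "Tw (rev [2..<j] @ [1] @ [2..<i+1]) (E (i+1)) = Tw (rev [2..<j-1+1]) (Vv i)"
    using assms by (simp add: Tw_append Vv_def del: upt_Suc)
  also have "\<dots> = Ust i (j-1)" using assms by (intro Ustate) auto
  finally show ?thesis .
qed

lemma UL: assumes "1 \<le> i" "i + 2 \<le> j" "j \<le> n"
  shows "Tw (gamma_word (j-1) @ [j]) (Ust i (j-1)) = Q q (Ust i (j-1)) (E j)"
proof -
  define w where "w = gamma_word (j-1) @ [j]"
  have okw: "okw w" unfolding w_def using assms by (auto intro: okw_gamma)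
  have jn: "j \<in> {1..n}" using assms by auto
  have P1: "Tw w (E m) = E m" if "1 \<le> m" "m + 2 \<le> j" for m
  proof -
    have "T j (E m) = E m" using that assms by (intro TE_far) auto
    thus ?thesis unfolding w_def using that assms G_lemma[of m "j-1"] by (simp add: Tw_append)
  qed
  have P2: "Tw w (E (j-1)) = Q q (E (j-1)) (E j)"
  proof -
    have "T j (E (j-1)) = R j (j-1)" using assms TEadj_up[of "j-1"] by (simp add: R_step R_base)
    moreover have "Tw (gamma_word (j-1)) (R j (j-1)) = Q q (R (j-1) (j-1)) (E j)"
    proof -
      have e1: "j - 2 + 1 = j - 1" using assms by arith
      have "1 \<le> j - 2" "j - 2 + 2 \<le> j" using assms by arith+
      from L_lemma[OF this assms(3)] show ?thesis unfolding e1 .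
    qed
    ultimately show ?thesis unfolding w_def by (simp add: Tw_append R_base)
  qed
  have P3: "Tw w (R (j-1) 2) = Q q (R (j-1) 2) (E j)"
  proof (cases "j = 3")
    case True thus ?thesis using P2 by (simp add: R_base)
  next
    case False
    hence j4: "4 \<le> j" using assms by simp
    have P5: "Tw w (R (j-2) 2) = R (j-2) 2" using j4 by (intro R_fixw okw P1) auto
    have e: "j - 1 - 1 = j - 2" by arith
    have rs: "R (j-1) 2 = Q q (E (j-1)) (R (j-2) 2)" using j4 R_step[of 2 "j-1"] unfolding e by simp
    have "Tw w (R (j-1) 2) = Q q (Q q (E (j-1)) (E j)) (R (j-2) 2)"
      unfolding rs by (simp add: Tw_Q okw P2 P5)
    also have "\<dots> = Q q (Q q (E (j-1)) (R (j-2) 2)) (E j)"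
      using j4 assms by (intro J3 cmt_ER) auto
    also have "\<dots> = Q q (R (j-1) 2) (E j)" unfolding rs ..
    finally show ?thesis .
  qed
  have P6: "Tw w (Q (q^2) (R (j-1) 2) (E 1)) = Q q (Q (q^2) (R (j-1) 2) (E 1)) (E j)"
  proof -
    have "Tw w (Q (q^2) (R (j-1) 2) (E 1)) = Q (q^2) (Q q (R (j-1) 2) (E j)) (E 1)"
      using assms by (simp add: Tw_Q okw P3 P1)
    also have "\<dots> = Q q (Q (q^2) (R (j-1) 2) (E 1)) (E j)"
      using assms by (intro J3 cmtE) auto
    finally show ?thesis .
  qed
  show ?thesis
  proof (cases "i = 1")
    case True thus ?thesis using P6 by (simp add: Ust_def w_def)
  next
    case False
    hence i2: "2 \<le> i" using assms by simp
    have u: "Ust i (j-1) = Q q (Q (q^2) (R (j-1) 2) (E 1)) (Sa 2 i)"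
    proof -
      have "\<not> (j - 1 \<le> i)" using assms by arith
      thus ?thesis using False by (simp add: Ust_def)
    qed
    have P4: "Tw w (Sa 2 i) = Sa 2 i" using i2 assms by (intro Sa_fixw okw P1) auto
    have "Tw w (Ust i (j-1)) = Q q (Q q (Q (q^2) (R (j-1) 2) (E 1)) (E j)) (Sa 2 i)"
      unfolding u by (simp add: Tw_Q okw P6 P4)
    also have "\<dots> = Q q (Ust i (j-1)) (E j)"
      unfolding u using i2 assms by (intro J3 cmt_ES) auto
    finally show ?thesis unfolding w_def .
  qed
qed

end

declare One_nat_def [simp del]
context uq begin

lemma Epos_Tw: "Epos T E i j = Tw (Gword (j - 1) @ rev [i+2..<j+1]) (E (i + 1))"
  by (simp add: Epos_def Tw_def)
lemma Eneg_Tw: "Eneg T E i j = Tw (Gword (j - 1) @ rev [2..<j+1] @ [1] @ [2..<i+1]) (E (i + 1))"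
  by (simp add: Eneg_def Tw_def)
lemma Ediag_Tw: "Ediag T E j = Tw (Gword (j - 1) @ rev [2..<j+1]) (E 1)"
  by (simp add: Ediag_def Tw_def)

lemma Rchain: assumes "1 \<le> i" "i + 1 \<le> j" "j \<le> n" shows "Tw (rev [i+2..<j+1]) (E (i+1)) = R j (i+1)"
  using assms
proof (induction j)
  case 0 thus ?case by simp
next
  case (Suc j)
  show ?case
  proof (cases "j = i")
    case True thus ?thesis by (simp add: R_base)
  next
    case False
    hence "i + 1 \<le> j" using Suc by simp
    thus ?thesis using Suc R_a[of "i+1" j] by simp
  qed
qed

lemma Gword_pred: assumes "2 \<le> j" shows "Gword (j - 1) = Gword (j - 2) @ gamma_word (j - 1)"
proof -
  have "j - 1 = Suc (j - 2)" using assms by arith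
  thus ?thesis using Gword_Suc[of "j-2"] by simp
qed

lemma Epos_R: assumes "1 \<le> i" "i + 1 \<le> j" "j \<le> n" shows "Epos T E i j = Tw (Gword (j-1)) (R j (i+1))"
  unfolding Epos_Tw using Rchain[OF assms] by (simp add: Tw_append del: upt_Suc)

lemma c2pos: assumes "1 \<le> i" "i + 2 \<le> j" "j \<le> n"
  shows "Epos T E i j = Q q (Epos T E i (j-1)) (E j)"
proof -
  have ok: "okw (Gword (j-2))" using assms by (intro okw_Gword) auto
  have "Epos T E i j = Tw (Gword (j-2)) (Tw (gamma_word (j-1)) (R j (i+1)))"
    using assms Epos_R[of i j] Gword_pred[of j] by (simp add: Tw_append)
  also have "\<dots> = Tw (Gword (j-2)) (Q q (R (j-1) (i+1)) (E j))" using assms L_lemma by simp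
  also have "\<dots> = Q q (Tw (Gword (j-2)) (R (j-1) (i+1))) (E j)"
    using assms ok by (simp add: Tw_Q Gword_fixE)
  also have "Tw (Gword (j-2)) (R (j-1) (i+1)) = Epos T E i (j-1)"
  proof -
    have e: "j - 1 - 1 = j - 2" by arith
    show ?thesis using assms Epos_R[of i "j-1"] unfolding e by simp
  qed
  finally show ?thesis .
qed

lemma c2neg: assumes "1 \<le> i" "i + 2 \<le> j" "j \<le> n"
  shows "Eneg T E i j = Q q (Eneg T E i (j-1)) (E j)"
proof -
  define U where "U = Tw (rev [2..<j] @ [1] @ [2..<i+1]) (E (i+1))"
  have ok: "okw (Gword (j-2))" using assms by (intro okw_Gword) auto
  have U: "U = Ust i (j-1)" unfolding U_def using UU_form[OF assms] .
  have r: "rev [2..<j+1] = j # rev [2..<j]" using assms by simp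
  have "Eneg T E i j = Tw (Gword (j-2)) (Tw (gamma_word (j-1) @ [j]) U)"
    unfolding Eneg_Tw U_def r using assms Gword_pred[of j] by (simp add: Tw_append del: upt_Suc)
  also have "\<dots> = Tw (Gword (j-2)) (Q q U (E j))" using UL[OF assms] U by simp
  also have "\<dots> = Q q (Tw (Gword (j-2)) U) (E j)"
    using assms ok by (simp add: Tw_Q Gword_fixE)
  also have "Tw (Gword (j-2)) U = Eneg T E i (j-1)"
  proof -
    have e: "j - 1 - 1 = j - 2" by arith
    have e2: "j - 1 + 1 = j" using assms by arith
    show ?thesis unfolding Eneg_Tw U_def e e2 by (simp add: Tw_append del: upt_Suc)
  qed
  finally show ?thesis .
qed

lemma c1: "Epos T E 1 2 = Q (q^2) (E 1) (E 2)"
  unfolding Epos_Tw by (simp add: Gword_def gamma_word_def TE12)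


lemma Rchain2: assumes "2 \<le> j" "j \<le> n" shows "Tw (rev [3..<j+1]) (E 2) = R j 2"
  using Rchain[of 1 j] assms by (simp add: numeral_3_eq_3)

lemma fix_rev3_E1: "Tw (rev [3..<j+1]) (E 1) = E 1" if "j \<le> n" for j
  using that by (intro Tw_fix_rev TE_far) auto

lemma c4: assumes "2 \<le> j" "j \<le> n"
  shows "Ediag T E j = S (inverse (qnum q 2)) (Epos T E 1 j * Eneg T E 1 j - Eneg T E 1 j * Epos T E 1 j)"
proof -
  define t where "t = inverse (qnum q 2)"
  define W where "W = Gword (j-1)"
  have ok: "okw W" unfolding W_def using assms by (intro okw_Gword) auto
  have ok3: "okw (rev [3..<j+1])" using assms by (auto simp: okw_def)
  have r2: "rev [2..<j+1] = rev [3..<j+1] @ [2]"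
  proof -
    have "[2..<j+1] = 2 # [3..<j+1]" using assms upt_conv_Cons[of 2 "j+1"] by (simp add: numeral_3_eq_3 del: upt_Suc)
    thus ?thesis by simp
  qed
  have A: "Epos T E 1 j = Tw W (R j 2)" unfolding W_def using Epos_R[of 1 j] assms by (simp add: numeral_2_eq_2)
  have B: "Eneg T E 1 j = Tw W (Q (q^2) (R j 2) (E 1))"
  proof -
    have "Eneg T E 1 j = Tw W (Tw (rev [3..<j+1]) (T 2 (T 1 (E 2))))"
      unfolding Eneg_Tw W_def r2 by (simp add: Tw_append del: upt_Suc)
    also have "T 2 (T 1 (E 2)) = Q (q^2) (E 2) (E 1)" by (simp add: TE12 B1[unfolded Y_def])
    also have "Tw (rev [3..<j+1]) (Q (q^2) (E 2) (E 1)) = Q (q^2) (R j 2) (E 1)"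
      unfolding Tw_Q[OF ok3] Rchain2[OF assms] fix_rev3_E1[OF assms(2)] ..
    finally show ?thesis .
  qed
  have C: "Ediag T E j = Tw W (S t (Q 1 (R j 2) (Q (q^2) (R j 2) (E 1))))"
  proof -
    have "Ediag T E j = Tw W (Tw (rev [3..<j+1]) (T 2 (E 1)))"
      unfolding Ediag_Tw W_def r2 by (simp add: Tw_append del: upt_Suc)
    also have "T 2 (E 1) = S t (Q 1 (E 2) (Q (q^2) (E 2) (E 1)))" using TE21 by (simp add: t_def)
    also have "Tw (rev [3..<j+1]) (S t (Q 1 (E 2) (Q (q^2) (E 2) (E 1)))) = S t (Q 1 (R j 2) (Q (q^2) (R j 2) (E 1)))"
      unfolding Tw_S[OF ok3] Tw_Q[OF ok3] Rchain2[OF assms] fix_rev3_E1[OF assms(2)] ..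
    finally show ?thesis .
  qed
  show ?thesis unfolding C A B t_def[symmetric] Q_def using ok by (simp add: Tw_S Tw_mult Tw_diff)
qed

definition Wp :: "nat \<Rightarrow> nat list" where
  "Wp k = Gword (k - 1) @ rev [2..<k+1] @ [1] @ [2..<k]"

lemma okw_Wp: "k \<le> n \<Longrightarrow> okw (Wp k)"
  unfolding Wp_def using okw_Gword[of "k-1"] n_ge by (auto simp: okw_def)

lemma Eneg_Wp: "2 \<le> k \<Longrightarrow> Eneg T E (k-1) k = Tw (Wp k) (E k)"
  unfolding Eneg_Tw Wp_def by simp

lemma P_lemma: assumes "2 \<le> m" "m \<le> n" "Tw (Wp m) (F m) = F m" "Tw (Wp m) (Kinv m) = Kinv m"
  shows "Tw (Gword m) (E m) = - (F m * Kinv m)"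
proof -
  have g: "Gword m = Wp m @ [m]"
  proof -
    have "m = Suc (m - 1)" using assms by arith
    hence "Gword m = Gword (m-1) @ gamma_word m" using Gword_Suc[of "m-1"] by simp
    moreover have "[2..<m+1] = [2..<m] @ [m]" using assms by simp
    ultimately show ?thesis unfolding Wp_def gamma_word_def by simp
  qed
  have mn: "m \<in> {1..n}" using assms by auto
  show ?thesis unfolding g using assms mn okw_Wp[of m] by (simp add: Tw_append T_Ei Tw_uminus Tw_mult)
qed

lemma P1: "Tw (Gword 1) (E 1) = - (F 1 * Kinv 1)"
  using one_in by (simp add: Gword_def gamma_word_def T_Ei upt_rec)

lemma NE2: "Tw (Wp 2) (E 2) = E 2"
proof -
  have "Tw (Wp 2) (E 2) = T 1 (T 2 (T 1 (E 2)))" by (simp add: Wp_def Gword_def gamma_word_def upt_rec)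
  thus ?thesis by (simp add: TE12 B1[unfolded Y_def] A2_12)
qed

lemma NE_step: assumes "3 \<le> k" "k \<le> n" "Tw (Wp (k-1)) (E (k-1)) = E (k-1)"
  and P: "Tw (Gword (k-1)) (E (k-1)) = - (F (k-1) * Kinv (k-1))"
  shows "Tw (Wp k) (E k) = E k"
proof -
  define V where "V = rev [2..<k] @ [1] @ [2..<k-1]"
  define U where "U = Tw V (E (k-1))"
  have e1: "k - 1 - 1 = k - 2" by arith
  have e2: "k - 2 + 1 = k - 1" using assms by arith
  have e3: "k - 1 + 1 = k" using assms by arith
  have kn: "k \<in> {1..n}" and k1n: "k - 1 \<in> {1..n}" using assms by auto
  have okV: "okw V" unfolding V_def using assms by (auto simp: okw_def)
  have ok1: "okw (Gword (k-1))" "okw (Gword (k-2))" using assms by (auto intro: okw_Gword)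
  have gk: "gamma_word (k-1) = V @ [k-1]"
  proof -
    have kk: "k = Suc (k-1)" using assms by arith
    have "[2..<Suc (k-1)] = [2..<k-1] @ [k-1]" using assms by (intro upt_Suc_append) arith
    hence "[2..<k] = [2..<k-1] @ [k-1]" using kk by metis
    thus ?thesis unfolding gamma_word_def V_def e3 by simp
  qed
  have TVEk: "Tw V (E k) = Q q (E (k-1)) (E k)"
  proof -
    have kk: "k = Suc (k-1)" using assms by arith
    have "[2..<Suc (k-1)] = [2..<k-1] @ [k-1]" using assms by (intro upt_Suc_append) arith
    hence "rev [2..<k] = (k-1) # rev [2..<k-1]" using kk by (metis rev_append rev_singleton_conv append_Cons append_Nil)
    hence v: "V = (k-1) # (rev [2..<k-1] @ [1] @ [2..<k-1])" unfolding V_def by simp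
    have "Tw (rev [2..<k-1] @ [1] @ [2..<k-1]) (E k) = E k" using assms
      by (intro Tw_fix TE_far) auto
    thus ?thesis unfolding v using assms TEadj_dn[of "k-1"] e3 by simp
  qed
  have wp: "Wp k = Gword (k-1) @ [k] @ gamma_word (k-1)"
  proof -
    have "rev [2..<k+1] @ [1] @ [2..<k] = [k] @ gamma_word (k-1)"
      unfolding gamma_word_def e3 using assms by simp
    thus ?thesis unfolding Wp_def by simp
  qed
  have s1: "Tw (gamma_word (k-1)) (E k) = Q q U (Q q (E (k-1)) (E k))"
  proof -
    have "T (k-1) (E k) = Q q (E (k-1)) (E k)" using assms TEadj_dn[of "k-1"] e3 by simp
    thus ?thesis unfolding gk U_def using okV by (simp add: Tw_append Tw_Q TVEk)
  qed
  have s2: "T k (Q q (E (k-1)) (E k)) = E (k-1)" using assms A2_dn[of "k-1"] e3 by simp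
  have UU: "U = Ust (k-2) (k-1)"
  proof -
    have "1 \<le> k - 2" "k - 2 + 2 \<le> k" using assms by arith+
    from UU_form[OF this assms(2)] show ?thesis unfolding U_def V_def e2 .
  qed
  have s3: "Tw (gamma_word (k-1) @ [k]) U = Q q U (E k)"
  proof -
    have "1 \<le> k - 2" "k - 2 + 2 \<le> k" using assms by arith+
    from UL[OF this assms(2)] show ?thesis unfolding UU .
  qed
  have s4: "Tw (Gword (k-2)) U = E (k-1)"
  proof -
    have "Tw (Gword (k-2)) U = Tw (Wp (k-1)) (E (k-1))"
      unfolding U_def V_def Wp_def e1 e3 by (simp add: Tw_append)
    thus ?thesis using assms(3) by simp
  qed
  have "Tw (Wp k) (E k) = Tw (Gword (k-1)) (Q q (T k U) (E (k-1)))"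
    unfolding wp using s1 s2 kn by (simp add: Tw_append T_Q)
  also have "\<dots> = Q q (Tw (Gword (k-2)) (Tw (gamma_word (k-1) @ [k]) U)) (- (F (k-1) * Kinv (k-1)))"
    using ok1 P assms Gword_pred[of k] by (simp add: Tw_Q Tw_append)
  also have "\<dots> = Q q (Q q (E (k-1)) (E k)) (- (F (k-1) * Kinv (k-1)))"
    using s3 s4 ok1 assms by (simp add: Tw_Q Gword_fixE)
  also have "\<dots> = T (k-1) (Q q (E k) (E (k-1)))"
  proof -
    have t1: "T (k-1) (E k) = Q q (E (k-1)) (E k)" using assms TEadj_dn[of "k-1"] e3 by simp
    show ?thesis by (simp only: T_Q[OF k1n] t1 T_Ei[OF k1n])
  qed
  also have "\<dots> = E k" using assms A2_up[of "k-1"] e3 by simp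
  finally show ?thesis .
qed

lemma c3: assumes "3 \<le> j" "j \<le> n" "Tw (Wp (j-1)) (E (j-1)) = E (j-1)"
  shows "Epos T E (j-1) j = Q q (E (j-1)) (Epos T E (j-2) j)"
proof -
  define V where "V = rev [2..<j] @ [1] @ [2..<j-1]"
  have e1: "j - 1 - 1 = j - 2" by arith
  have e2: "j - 2 + 1 = j - 1" using assms by arith
  have e3: "j - 1 + 1 = j" using assms by arith
  have okV: "okw V" unfolding V_def using assms by (auto simp: okw_def)
  have ok2: "okw (Gword (j-2))" using assms by (auto intro: okw_Gword)
  have gk: "gamma_word (j-1) = V @ [j-1]"
  proof -
    have jj: "j = Suc (j-1)" using assms by arith
    have "[2..<Suc (j-1)] = [2..<j-1] @ [j-1]" using assms by (intro upt_Suc_append) arith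
    hence "[2..<j] = [2..<j-1] @ [j-1]" using jj by metis
    thus ?thesis unfolding gamma_word_def V_def e3 by simp
  qed
  have TVEj: "Tw V (E j) = Q q (E (j-1)) (E j)"
  proof -
    have jj: "j = Suc (j-1)" using assms by arith
    have "[2..<Suc (j-1)] = [2..<j-1] @ [j-1]" using assms by (intro upt_Suc_append) arith
    hence "rev [2..<j] = (j-1) # rev [2..<j-1]" using jj by (metis rev_append rev_singleton_conv append_Cons append_Nil)
    hence v: "V = (j-1) # (rev [2..<j-1] @ [1] @ [2..<j-1])" unfolding V_def by simp
    have "Tw (rev [2..<j-1] @ [1] @ [2..<j-1]) (E j) = E j" using assms
      by (intro Tw_fix TE_far) auto
    thus ?thesis unfolding v using assms TEadj_dn[of "j-1"] e3 by simp
  qed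
  have Tj: "T (j-1) (E j) = Q q (E (j-1)) (E j)" using assms TEadj_dn[of "j-1"] e3 by simp
  have NE: "Tw (Gword (j-2) @ V) (E (j-1)) = E (j-1)"
    using assms(3) unfolding Wp_def V_def e1 e3 by simp
  have A: "Epos T E (j-1) j = Q q (E (j-1)) (Tw (Gword (j-2)) (Q q (E (j-1)) (E j)))"
  proof -
    have "Epos T E (j-1) j = Tw (Gword (j-2)) (Tw V (T (j-1) (E j)))"
      unfolding Epos_Tw e3 using assms Gword_pred[of j] gk by (simp add: Tw_append)
    also have "\<dots> = Q q (Tw (Gword (j-2) @ V) (E (j-1))) (Tw (Gword (j-2)) (Q q (E (j-1)) (E j)))"
      unfolding Tj using okV ok2 TVEj by (simp add: Tw_Q Tw_append)
    finally show ?thesis using NE by simp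
  qed
  have B: "Epos T E (j-2) j = Tw (Gword (j-2)) (Q q (E (j-1)) (E j))"
  proof -
    have "1 \<le> j - 2" "j - 2 + 2 \<le> j" using assms by arith+
    note L = L_lemma[OF this assms(2), unfolded e2]
    have "Epos T E (j-2) j = Tw (Gword (j-1)) (R j (j-1))"
      using Epos_R[of "j-2" j] assms unfolding e2 by simp
    also have "\<dots> = Tw (Gword (j-2)) (Q q (E (j-1)) (E j))"
      using assms Gword_pred[of j] L by (simp add: Tw_append R_base)
    finally show ?thesis .
  qed
  show ?thesis using A B by simp
qed

end

declare One_nat_def [simp del]

datatype 'a opp = Opp (un: 'a)

instantiation opp :: (ring_1) ring_1
begin
definition zero_opp where "0 = Opp 0"
definition one_opp where "1 = Opp 1"
definition plus_opp where "x + y = Opp (un x + un y)"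
definition minus_opp where "x - y = Opp (un x - un y)"
definition uminus_opp where "- x = Opp (- un x)"
definition times_opp where "x * y = Opp (un y * un x)"
instance
  by standard (auto simp: zero_opp_def one_opp_def plus_opp_def minus_opp_def uminus_opp_def times_opp_def
      algebra_simps intro!: opp.expand)
end

lemma un_0[simp]: "un 0 = 0" by (simp add: zero_opp_def)
lemma un_1[simp]: "un 1 = 1" by (simp add: one_opp_def)
lemma un_add[simp]: "un (x + y) = un x + un y" by (simp add: plus_opp_def)
lemma un_diff[simp]: "un (x - y) = un x - un y" by (simp add: minus_opp_def)
lemma un_uminus[simp]: "un (- x) = - un x" by (simp add: uminus_opp_def)
lemma un_mult[simp]: "un (x * y) = un y * un x" by (simp add: times_opp_def)
lemma un_pow[simp]: "un (x ^ k) = un x ^ k"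
  by (induct k) (simp_all add: power_commutes)
lemma un_sum: "un (sum f A) = sum (\<lambda>i. un (f i)) A"
  by (induct A rule: infinite_finite_induct) simp_all
lemma opp_eq: "x = y \<longleftrightarrow> un x = un y" by (cases x, cases y) simp


lemma qnum_inv: "qnum (inverse v) m = qnum v m"
proof -
  have "qnum (inverse v) m = (inverse v ^ m - v ^ m) / (inverse v - v)"
    by (simp add: qnum_def)
  also have "\<dots> = (v ^ m - inverse v ^ m) / (v - inverse v)"
    by (metis minus_diff_eq minus_divide_divide)
  finally show ?thesis by (simp add: qnum_def)
qed
lemma qfact_inv: "qfact (inverse v) m = qfact v m" by (simp add: qfact_def qnum_inv)
lemma qi_inv: "qi (inverse q) i = inverse (qi q i)" by (simp add: qi_def power_inverse)

context uq begin

lemma ok_cen': "x * of_k c = of_k c * x" using ok_cen by simp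

lemma dpow_opp: "un (dpow (\<lambda>c. Opp (of_k c)) (inverse v) (Opp x) r) = dpow of_k v x r"
  unfolding dpow_def by (simp add: qfact_inv ok_cen')

lemma Kpow_mult: "i \<in> {1..n} \<Longrightarrow> Kpow K Kinv i m * Kpow Kinv K i m = 1"
proof -
  assume i: "i \<in> {1..n}"
  have a: "K i ^ k * Kinv i ^ k = 1" for k
  proof (induct k)
    case (Suc k)
    have "K i ^ Suc k * Kinv i ^ Suc k = K i ^ k * (K i * Kinv i) * Kinv i ^ k"
      by (simp only: power_Suc2[of "K i"] power_Suc[of "Kinv i"] mult.assoc)
    thus ?case using Suc KKinv[OF i] by simp
  qed simp
  have b: "Kinv i ^ k * K i ^ k = 1" for k
  proof (induct k)
    case (Suc k)
    have "Kinv i ^ Suc k * K i ^ Suc k = Kinv i ^ k * (Kinv i * K i) * K i ^ k"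
      by (simp only: power_Suc2[of "Kinv i"] power_Suc[of "K i"] mult.assoc)
    thus ?case using Suc KinvK[OF i] by simp
  qed simp
  show ?thesis by (simp add: Kpow_def a b)
qed

lemma T_Kinv: assumes i: "i \<in> {1..n}" and j: "j \<in> {1..n}"
  shows "T i (Kinv j) = Kpow Kinv K i (- cartan i j) * Kinv j"
proof -
  let ?A = "T i (K j)" and ?X = "Kpow Kinv K i (- cartan i j) * Kinv j"
  have AX: "?A * ?X = 1"
  proof -
    have "?A * ?X = K j * (Kpow K Kinv i (- cartan i j) * Kpow Kinv K i (- cartan i j)) * Kinv j"
      using T_K[OF i j] by (simp add: mult.assoc)
    thus ?thesis using Kpow_mult[OF i] KKinv[OF j] by simp
  qed
  have TA: "T i (Kinv j) * ?A = 1" using T_mult[OF i, of "Kinv j" "K j"] KinvK[OF j] T_one[OF i] by simp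
  have "T i (Kinv j) = T i (Kinv j) * (?A * ?X)" using AX by simp
  also have "\<dots> = ?X" using TA by (simp add: mult.assoc[symmetric])
  finally show ?thesis .
qed


lemma T_Fj: "i \<in> {1..n} \<Longrightarrow> j\<in>{1..n} \<Longrightarrow> j \<noteq> i \<Longrightarrow>
          T i (F j) = (\<Sum>r = 0..nat (- cartan i j). of_k ((-1) ^ r * inverse (qi q i) ^ r) *
              dpow of_k (qi q i) (F i) r * F j * dpow of_k (qi q i) (F i) (nat (- cartan i j) - r))"
  using lT[THEN conjunct2, THEN conjunct2, THEN conjunct2, THEN conjunct2, THEN conjunct2,
     THEN conjunct2, THEN conjunct2, THEN conjunct2] by blast

lemma SerreF: "i \<in> {1..n} \<Longrightarrow> j \<in> {1..n} \<Longrightarrow> i \<noteq> j \<Longrightarrow>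
        (\<Sum>r = 0..nat (1 - cartan i j). of_k ((-1) ^ r) *
            dpow of_k (qi q i) (F i) (nat (1 - cartan i j) - r) * F j * dpow of_k (qi q i) (F i) r) = 0"
  using R7 by (meson bspec)

lemma serre_rev: assumes "(\<Sum>r = 0..m. of_k ((-1) ^ r) * A (m - r) * B * A r) = 0"
  shows "(\<Sum>r = 0..m. A r * B * A (m - r) * of_k ((-1) ^ r)) = 0"
proof -
  have "(\<Sum>r = 0..m. A r * B * A (m - r) * of_k ((-1) ^ r)) =
        (\<Sum>r = 0..m. A (m - r) * B * A (m - (m - r)) * of_k ((-1) ^ (m - r)))"
    by (subst sum.atLeastAtMost_rev) simp
  also have "\<dots> = (\<Sum>r = 0..m. of_k ((-1) ^ m) * (of_k ((-1) ^ r) * A (m - r) * B * A r))"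
  proof (rule sum.cong)
    fix r assume "r \<in> {0..m}"
    hence rm: "r \<le> m" by simp
    have "((-1)::'k) ^ (m - r) = (-1) ^ m * (-1) ^ r"
    proof -
      have "((-1)::'k) ^ m = (-1) ^ (m - r) * (-1) ^ r" using rm by (simp add: power_add[symmetric])
      hence "((-1)::'k) ^ m * (-1) ^ r = (-1) ^ (m - r) * ((-1) ^ r * (-1) ^ r)" by (simp add: mult.assoc)
      also have "((-1)::'k) ^ r * (-1) ^ r = 1" by (simp add: power_mult_distrib[symmetric])
      finally show ?thesis by simp
    qed
    thus "A (m - r) * B * A (m - (m - r)) * of_k ((-1) ^ (m - r)) = of_k ((-1) ^ m) * (of_k ((-1) ^ r) * A (m - r) * B * A r)"
      using rm by (simp add: S_ok2 S_ok mult.assoc mult.commute)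
  qed simp
  also have "\<dots> = of_k ((-1) ^ m) * (\<Sum>r = 0..m. of_k ((-1) ^ r) * A (m - r) * B * A r)"
    by (simp add: sum_distrib_left)
  finally show ?thesis using assms by simp
qed


definition ofo :: "'k \<Rightarrow> 'a opp" where "ofo c = Opp (of_k c)"
lemma un_ofo[simp]: "un (ofo c) = of_k c" by (simp add: ofo_def)

lemma dpow_opp': "un (dpow ofo (inverse v) (Opp x) r) = dpow of_k v x r"
  using dpow_opp[of v x r] unfolding ofo_def[abs_def] .
lemma dpow_opp_qi: "un (dpow ofo (qi (inverse q) i) (Opp x) r) = dpow of_k (qi q i) x r"
  using dpow_opp[of "qi q i" x r] unfolding qi_inv ofo_def[abs_def] .

lemma uq_opp: "uq ofo (inverse q) n (\<lambda>i. Opp (F i)) (\<lambda>i. Opp (E i))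
     (\<lambda>i. Opp (Kinv i)) (\<lambda>i. Opp (K i)) (\<lambda>i x. Opp (T i (un x)))"
proof -
  have sc': "sc ofo"
  proof
    show "ofo 1 = 1" by (simp add: opp_eq)
    show "\<forall>a b. ofo (a + b) = ofo a + ofo b" by (simp add: opp_eq)
    show "\<forall>a b. ofo (a * b) = ofo a * ofo b" by (simp add: opp_eq ok_mm2 mult.commute)
    show "\<forall>c x. ofo c * x = x * ofo c" by (simp add: opp_eq ok_cen)
  qed
  have r1: "\<forall>i\<in>{1..n}. \<forall>j\<in>{1..n}.
        Opp (Kinv i) * Opp (Kinv j) = Opp (Kinv j) * Opp (Kinv i) \<and>
        Opp (Kinv i) * Opp (K j) = Opp (K j) * Opp (Kinv i) \<and>
        Opp (K i) * Opp (K j) = Opp (K j) * Opp (K i)"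
    using rels_KK by (simp add: opp_eq)
  have r2: "\<forall>i\<in>{1..n}. Opp (Kinv i) * Opp (K i) = 1 \<and> Opp (K i) * Opp (Kinv i) = 1"
    using KKinv KinvK by (simp add: opp_eq)
  have r3: "\<forall>i\<in>{1..n}. \<forall>j\<in>{1..n}. Opp (Kinv i) * Opp (F j) * Opp (K i)
        = ofo (qi (inverse q) i powi cartan i j) * Opp (F j)"
    using KFK by (simp add: opp_eq qi_inv power_int_inverse power_int_minus mult.assoc S_ok2)
  have r4: "\<forall>i\<in>{1..n}. \<forall>j\<in>{1..n}. Opp (Kinv i) * Opp (E j) * Opp (K i)
        = ofo (qi (inverse q) i powi (- cartan i j)) * Opp (E j)"
    using KEK by (simp add: opp_eq qi_inv power_int_inverse power_int_minus mult.assoc S_ok2)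
  have r5: "\<forall>i\<in>{1..n}. \<forall>j\<in>{1..n}. Opp (F i) * Opp (E j) - Opp (E j) * Opp (F i) =
        (if i = j then ofo (inverse (qi (inverse q) i - inverse (qi (inverse q) i))) * (Opp (Kinv i) - Opp (K i)) else 0)"
  proof (intro ballI)
    fix i j assume i: "i \<in> {1..n}" and j: "j \<in> {1..n}"
    show "Opp (F i) * Opp (E j) - Opp (E j) * Opp (F i) =
        (if i = j then ofo (inverse (qi (inverse q) i - inverse (qi (inverse q) i))) * (Opp (Kinv i) - Opp (K i)) else 0)"
    proof (cases "i = j")
      case True
      have "inverse (inverse (qi q i) - qi q i) = - inverse (qi q i - inverse (qi q i))"
        by (metis inverse_minus_eq minus_diff_eq)
      thus ?thesis using True EF[OF i i] by (simp add: opp_eq qi_inv S_ok2 algebra_simps)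
    next
      case False
      thus ?thesis using EF[OF j i] by (simp add: opp_eq)
    qed
  qed
  have r6: "\<forall>i\<in>{1..n}. \<forall>j\<in>{1..n}. i \<noteq> j \<longrightarrow>
        (\<Sum>r = 0..nat (1 - cartan i j). ofo ((-1) ^ r) *
            dpow ofo (qi (inverse q) i) (Opp (F i)) (nat (1 - cartan i j) - r) * Opp (F j) *
            dpow ofo (qi (inverse q) i) (Opp (F i)) r) = 0"
  proof (intro ballI impI)
    fix i j assume i: "i \<in> {1..n}" and j: "j \<in> {1..n}" and ij: "i \<noteq> j"
    have "(\<Sum>r = 0..nat (1 - cartan i j). dpow of_k (qi q i) (F i) r * F j *
            dpow of_k (qi q i) (F i) (nat (1 - cartan i j) - r) * of_k ((-1) ^ r)) = 0"
      by (rule serre_rev[OF SerreF[OF i j ij]])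
    thus "(\<Sum>r = 0..nat (1 - cartan i j). ofo ((-1) ^ r) *
            dpow ofo (qi (inverse q) i) (Opp (F i)) (nat (1 - cartan i j) - r) * Opp (F j) *
            dpow ofo (qi (inverse q) i) (Opp (F i)) r) = 0"
      by (simp add: opp_eq un_sum dpow_opp_qi mult.assoc)
  qed
  have r7: "\<forall>i\<in>{1..n}. \<forall>j\<in>{1..n}. i \<noteq> j \<longrightarrow>
        (\<Sum>r = 0..nat (1 - cartan i j). ofo ((-1) ^ r) *
            dpow ofo (qi (inverse q) i) (Opp (E i)) (nat (1 - cartan i j) - r) * Opp (E j) *
            dpow ofo (qi (inverse q) i) (Opp (E i)) r) = 0"
  proof (intro ballI impI)
    fix i j assume i: "i \<in> {1..n}" and j: "j \<in> {1..n}" and ij: "i \<noteq> j"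
    have "(\<Sum>r = 0..nat (1 - cartan i j). dpow of_k (qi q i) (E i) r * E j *
            dpow of_k (qi q i) (E i) (nat (1 - cartan i j) - r) * of_k ((-1) ^ r)) = 0"
      by (rule serre_rev[OF SerreE[OF i j ij]])
    thus "(\<Sum>r = 0..nat (1 - cartan i j). ofo ((-1) ^ r) *
            dpow ofo (qi (inverse q) i) (Opp (E i)) (nat (1 - cartan i j) - r) * Opp (E j) *
            dpow ofo (qi (inverse q) i) (Opp (E i)) r) = 0"
      by (simp add: opp_eq un_sum dpow_opp_qi mult.assoc)
  qed
  have rel: "Uq_relations ofo n (inverse q) (\<lambda>i. Opp (F i)) (\<lambda>i. Opp (E i)) (\<lambda>i. Opp (Kinv i)) (\<lambda>i. Opp (K i))"
    unfolding Uq_relations_def using r1 r2 r3 r4 r5 r6 r7 by blast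
  have lz: "lusztig_T ofo n (inverse q) (\<lambda>i. Opp (F i)) (\<lambda>i. Opp (E i)) (\<lambda>i. Opp (Kinv i)) (\<lambda>i. Opp (K i))
     (\<lambda>i x. Opp (T i (un x)))"
    unfolding lusztig_T_def
  proof (intro ballI conjI allI impI)
    fix i assume i: "i \<in> {1..n}"
    show "Opp (T i (un (x + y))) = Opp (T i (un x)) + Opp (T i (un y))" for x y
      using i by (simp add: opp_eq T_add)
    show "Opp (T i (un (x * y))) = Opp (T i (un x)) * Opp (T i (un y))" for x y
      using i by (simp add: opp_eq T_mult)
    show "Opp (T i (un 1)) = 1" using i by (simp add: opp_eq T_one)
    show "Opp (T i (un (ofo c))) = ofo c" for c using i by (simp add: opp_eq T_ok)
    show "Opp (T i (un (Opp (Kinv j)))) = Opp (Kinv j) * Kpow (\<lambda>i. Opp (Kinv i)) (\<lambda>i. Opp (K i)) i (- cartan i j)"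
      if j: "j \<in> {1..n}" for j
      using i j by (simp add: opp_eq T_Kinv Kpow_def)
    show "Opp (T i (un (Opp (F i)))) = - (Opp (E i) * Opp (K i))"
      using i by (simp add: opp_eq T_Fi)
    show "Opp (T i (un (Opp (E i)))) = - (Opp (Kinv i) * Opp (F i))"
      using i by (simp add: opp_eq T_Ei)
    show "Opp (T i (un (Opp (F j)))) =
          (\<Sum>r = 0..nat (- cartan i j). ofo ((-1) ^ r * qi (inverse q) i ^ r) *
              dpow ofo (qi (inverse q) i) (Opp (F i)) (nat (- cartan i j) - r) * Opp (F j) *
              dpow ofo (qi (inverse q) i) (Opp (F i)) r)"
      if j: "j \<in> {1..n}" "j \<noteq> i" for j
      using i j by (simp add: opp_eq un_sum dpow_opp_qi dpow_opp' T_Fj qi_inv S_ok S_ok2 mult.assoc power_inverse)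
    show "Opp (T i (un (Opp (E j)))) =
          (\<Sum>r = 0..nat (- cartan i j). ofo ((-1) ^ r * inverse (qi (inverse q) i) ^ r) *
              dpow ofo (qi (inverse q) i) (Opp (E i)) r * Opp (E j) *
              dpow ofo (qi (inverse q) i) (Opp (E i)) (nat (- cartan i j) - r))"
      if j: "j \<in> {1..n}" "j \<noteq> i" for j
      using i j by (simp add: opp_eq un_sum dpow_opp_qi dpow_opp' T_Ej qi_inv S_ok S_ok2 mult.assoc power_inverse)
  qed
  show ?thesis
  proof (rule uq.intro[OF sc'], unfold_locales)
    show "inverse q \<noteq> 0" using q_nz by simp
    show "\<forall>m::nat. m > 0 \<longrightarrow> inverse q ^ m \<noteq> 1"
      using q_not_root by (metis inverse_1 power_inverse inverse_inverse_eq)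
    show "n \<ge> 2" by (rule n_ge)
  qed (fact rel, fact lz)
qed

end

declare One_nat_def [simp del]
context uq begin

abbreviation Kp :: "nat \<Rightarrow> int \<Rightarrow> 'a" where "Kp i m \<equiv> Kpow K Kinv i m"

lemma cmt_pow: assumes "cmt x y" shows "cmt x (y ^ k)"
proof (induct k)
  case 0 show ?case by (simp add: cmt_def)
next
  case (Suc k) thus ?case using cmt_mult[OF assms Suc] by simp
qed

lemma cmt_Kp: assumes "i \<in> {1..n}" "j \<in> {1..n}" shows "cmt (Kp i a) (Kp j b)"
proof -
  have base: "cmt x y" if "x \<in> {K i, Kinv i}" "y \<in> {K j, Kinv j}" for x y
    using that rels_KK[OF assms] rels_KK[OF assms(2,1)] by (auto simp: cmt_def)
  have "cmt x (Kp j b)" if "x \<in> {K i, Kinv i}" for x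
    using that base by (auto simp: Kpow_def intro!: cmt_pow)
  hence "cmt (Kp j b) x" if "x \<in> {K i, Kinv i}" for x using that cmt_sym by blast
  hence "cmt (Kp j b) (Kp i a)" by (auto simp: Kpow_def intro!: cmt_pow)
  thus ?thesis by (rule cmt_sym)
qed

lemma KK_pow: "i \<in> {1..n} \<Longrightarrow> K i ^ (m + l) * Kinv i ^ l = K i ^ m"
proof (induct l)
  case (Suc l)
  have "K i ^ (m + Suc l) * Kinv i ^ Suc l = K i ^ (m + l) * (K i * Kinv i) * Kinv i ^ l"
    by (simp only: add_Suc_right power_Suc2[of "K i"] power_Suc[of "Kinv i"] mult.assoc)
  thus ?case using Suc KKinv by simp
qed simp
lemma KK_pow2: "i \<in> {1..n} \<Longrightarrow> K i ^ l * Kinv i ^ (m + l) = Kinv i ^ m"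
proof (induct l)
  case (Suc l)
  have "K i ^ Suc l * Kinv i ^ (m + Suc l) = K i ^ l * (K i * Kinv i) * Kinv i ^ (m + l)"
    by (simp only: add_Suc_right power_Suc2[of "K i"] power_Suc[of "Kinv i"] mult.assoc)
  thus ?case using Suc KKinv by simp
qed simp
lemma KK_pow3: "i \<in> {1..n} \<Longrightarrow> Kinv i ^ (m + l) * K i ^ l = Kinv i ^ m"
proof (induct l)
  case (Suc l)
  have "Kinv i ^ (m + Suc l) * K i ^ Suc l = Kinv i ^ (m + l) * (Kinv i * K i) * K i ^ l"
    by (simp only: add_Suc_right power_Suc2[of "Kinv i"] power_Suc[of "K i"] mult.assoc)
  thus ?case using Suc KinvK by simp
qed simp
lemma KK_pow4: "i \<in> {1..n} \<Longrightarrow> Kinv i ^ l * K i ^ (m + l) = K i ^ m"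
proof (induct l)
  case (Suc l)
  have "Kinv i ^ Suc l * K i ^ (m + Suc l) = Kinv i ^ l * (Kinv i * K i) * K i ^ (m + l)"
    by (simp only: add_Suc_right power_Suc2[of "Kinv i"] power_Suc[of "K i"] mult.assoc)
  thus ?case using Suc KinvK by simp
qed simp

lemma Kp_add: assumes i: "i \<in> {1..n}" shows "Kp i a * Kp i b = Kp i (a + b)"
proof -
  consider "0 \<le> a" "0 \<le> b" | "a < 0" "b < 0" | "0 \<le> a" "b < 0" | "a < 0" "0 \<le> b" by linarith
  thus ?thesis
  proof cases
    case 1 thus ?thesis by (simp add: Kpow_def nat_add_distrib power_add)
  next
    case 2
    have "nat (- (a + b)) = nat (- a) + nat (- b)" using 2 by simp
    thus ?thesis using 2 by (simp add: Kpow_def power_add)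
  next
    case 3
    show ?thesis
    proof (cases "0 \<le> a + b")
      case True
      have "nat a = nat (a + b) + nat (- b)" using 3 True by simp
      thus ?thesis using 3 True KK_pow[OF i, of "nat (a+b)" "nat (-b)"] by (simp add: Kpow_def)
    next
      case False
      have "nat (- b) = nat (- (a + b)) + nat a" using 3 False by simp
      thus ?thesis using 3 False KK_pow2[OF i, of "nat a" "nat (- (a+b))"] by (simp add: Kpow_def)
    qed
  next
    case 4
    show ?thesis
    proof (cases "0 \<le> a + b")
      case True
      have "nat b = nat (a + b) + nat (- a)" using 4 True by simp
      thus ?thesis using 4 True KK_pow4[OF i, of "nat (-a)" "nat (a+b)"] by (simp add: Kpow_def)
    next
      case False
      have "nat (- a) = nat (- (a + b)) + nat b" using 4 False by simp
      thus ?thesis using 4 False KK_pow3[OF i, of "nat (- (a+b))" "nat b"] by (simp add: Kpow_def)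
    qed
  qed
qed

lemma Kp_0[simp]: "Kp i 0 = 1" by (simp add: Kpow_def)
lemma Kp_1: "Kp i 1 = K i" by (simp add: Kpow_def)
lemma Kp_m1: "Kp i (-1) = Kinv i" by (simp add: Kpow_def)


fun KMl :: "nat list \<Rightarrow> (nat \<Rightarrow> int) \<Rightarrow> 'a" where
  "KMl [] v = 1"
| "KMl (j # js) v = Kp j (v j) * KMl js v"

lemma cmt_KMl: "i \<in> {1..n} \<Longrightarrow> set js \<subseteq> {1..n} \<Longrightarrow> cmt (Kp i a) (KMl js v)"
proof (induct js)
  case Nil thus ?case by (simp add: cmt_def)
next
  case (Cons j js) thus ?case by (simp add: cmt_mult cmt_Kp)
qed

lemma KMl_mult: "set js \<subseteq> {1..n} \<Longrightarrow> KMl js v * KMl js w = KMl js (\<lambda>j. v j + w j)"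
proof (induct js)
  case (Cons j js)
  hence j: "j \<in> {1..n}" and js: "set js \<subseteq> {1..n}" by auto
  have "KMl (j # js) v * KMl (j # js) w = Kp j (v j) * (KMl js v * Kp j (w j)) * KMl js w"
    by (simp add: mult.assoc)
  also have "KMl js v * Kp j (w j) = Kp j (w j) * KMl js v"
    using cmt_KMl[OF j js] by (simp add: cmt_def)
  also have "Kp j (v j) * (Kp j (w j) * KMl js v) * KMl js w = Kp j (v j + w j) * (KMl js v * KMl js w)"
    using Kp_add[OF j] by (simp add: mult.assoc[symmetric])
  finally show ?case using Cons js by simp
qed simp

lemma KMl_cong: "(\<And>j. j \<in> set js \<Longrightarrow> v j = w j) \<Longrightarrow> KMl js v = KMl js w"
  by (induct js) auto

lemma KMl_zero: "KMl js (\<lambda>_. 0) = 1" by (induct js) auto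

lemma KMl_delta: "distinct js \<Longrightarrow> i \<in> set js \<Longrightarrow> KMl js (\<lambda>j. if j = i then c else 0) = Kp i c"
proof (induct js)
  case (Cons j js)
  show ?case
  proof (cases "j = i")
    case True
    hence "KMl js (\<lambda>j. if j = i then c else 0) = KMl js (\<lambda>_. 0)"
      using Cons by (intro KMl_cong) auto
    thus ?thesis using True by (simp add: KMl_zero)
  next
    case False thus ?thesis using Cons by simp
  qed
qed simp

definition KM :: "(nat \<Rightarrow> int) \<Rightarrow> 'a" where "KM v = KMl [1..<n+1] v"

lemma setn: "set [1..<n+1] \<subseteq> {1..n}" by auto
lemma KM_mult: "KM v * KM w = KM (\<lambda>j. v j + w j)" unfolding KM_def using KMl_mult[OF setn] .
lemma KM_cong: "(\<And>j. j \<in> {1..n} \<Longrightarrow> v j = w j) \<Longrightarrow> KM v = KM w"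
  unfolding KM_def by (rule KMl_cong) auto
lemma KM_delta: "i \<in> {1..n} \<Longrightarrow> KM (\<lambda>j. if j = i then c else 0) = Kp i c"
  unfolding KM_def by (rule KMl_delta) auto
lemma KM_zero: "KM (\<lambda>_. 0) = 1" unfolding KM_def by (rule KMl_zero)
lemma KM_pow: "KM v ^ m = KM (\<lambda>j. int m * v j)"
proof (induct m)
  case 0 thus ?case using KM_zero by simp
next
  case (Suc m)
  have "KM v ^ Suc m = KM v * KM (\<lambda>j. int m * v j)" using Suc by (simp add: power_Suc)
  also have "\<dots> = KM (\<lambda>j. int (Suc m) * v j)" by (simp add: KM_mult algebra_simps)
  finally show ?case .
qed

lemma T_pow: "i \<in> {1..n} \<Longrightarrow> T i (x ^ m) = T i x ^ m"
  by (induct m) (simp_all add: T_one T_mult)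

definition dl :: "nat \<Rightarrow> nat \<Rightarrow> int" where "dl i l = (if l = i then 1 else 0)"

lemma T_KKp: assumes i: "i \<in> {1..n}" and j: "j \<in> {1..n}"
  shows "T i (Kp j c) = KM (\<lambda>l. c * (dl j l - cartan i j * dl i l))"
proof -
  have TK: "T i (K j) = KM (\<lambda>l. dl j l - cartan i j * dl i l)"
  proof -
    have "T i (K j) = KM (\<lambda>l. if l = j then 1 else 0) * KM (\<lambda>l. if l = i then - cartan i j else 0)"
      using T_K[OF i j] KM_delta[OF j, of 1] KM_delta[OF i, of "- cartan i j"] by (simp add: Kp_1)
    thus ?thesis by (simp add: KM_mult dl_def) (rule KM_cong, simp)
  qed
  have TKi: "T i (Kinv j) = KM (\<lambda>l. - (dl j l - cartan i j * dl i l))"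
  proof -
    have kp: "Kpow Kinv K i (- cartan i j) = Kp i (cartan i j)" by (simp add: Kpow_def)
    have "T i (Kinv j) = KM (\<lambda>l. if l = i then cartan i j else 0) * KM (\<lambda>l. if l = j then -1 else 0)"
      using T_Kinv[OF i j] KM_delta[OF j, of "-1"] KM_delta[OF i, of "cartan i j"] kp by (simp add: Kp_m1)
    thus ?thesis by (simp add: KM_mult dl_def) (rule KM_cong, simp)
  qed
  show ?thesis
  proof (cases "0 \<le> c")
    case True
    have "T i (Kp j c) = T i (K j) ^ nat c" using True by (simp add: Kpow_def T_pow[OF i])
    also have "\<dots> = KM (\<lambda>l. c * (dl j l - cartan i j * dl i l))" using True by (simp add: TK KM_pow)
    finally show ?thesis .
  next
    case False
    have "T i (Kp j c) = T i (Kinv j) ^ nat (- c)" using False by (simp add: Kpow_def T_pow[OF i])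
    also have "\<dots> = KM (\<lambda>l. c * (dl j l - cartan i j * dl i l))" using False by (simp add: TKi KM_pow) (rule KM_cong, simp add: algebra_simps)
    finally show ?thesis .
  qed
qed


lemma T_KMl: "i \<in> {1..n} \<Longrightarrow> set js \<subseteq> {1..n} \<Longrightarrow>
   T i (KMl js v) = KM (\<lambda>l. \<Sum>j\<leftarrow>js. v j * (dl j l - cartan i j * dl i l))"
proof (induct js)
  case Nil thus ?case using KM_zero T_one by simp
next
  case (Cons j js)
  hence j: "j \<in> {1..n}" by simp
  have "T i (KMl (j # js) v) = T i (Kp j (v j)) * T i (KMl js v)" using Cons by (simp add: T_mult)
  also have "\<dots> = KM (\<lambda>l. v j * (dl j l - cartan i j * dl i l)) *
       KM (\<lambda>l. \<Sum>j\<leftarrow>js. v j * (dl j l - cartan i j * dl i l))"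
    using Cons j T_KKp by simp
  finally show ?case by (simp add: KM_mult)
qed

definition csum :: "nat \<Rightarrow> (nat \<Rightarrow> int) \<Rightarrow> int" where
  "csum i v = (\<Sum>j = 1..n. cartan i j * v j)"

definition sv :: "nat \<Rightarrow> (nat \<Rightarrow> int) \<Rightarrow> nat \<Rightarrow> int" where
  "sv i v l = v l - dl i l * csum i v"

lemma T_KM: assumes i: "i \<in> {1..n}" shows "T i (KM v) = KM (sv i v)"
proof -
  have "T i (KM v) = KM (\<lambda>l. \<Sum>j\<leftarrow>[1..<n+1]. v j * (dl j l - cartan i j * dl i l))"
    unfolding KM_def using T_KMl[OF i setn] by (simp add: KM_def)
  also have "\<dots> = KM (sv i v)"
  proof (rule KM_cong)
    fix l assume l: "l \<in> {1..n}"
    have "(\<Sum>j\<leftarrow>[1..<n+1]. v j * (dl j l - cartan i j * dl i l)) = (\<Sum>j = 1..n. v j * (dl j l - cartan i j * dl i l))"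
    proof -
      have e: "{1..<n+1} = {1..n}" by auto
      show ?thesis unfolding sum_set_upt_conv_sum_list_nat[symmetric] set_upt e ..
    qed
    also have "\<dots> = (\<Sum>j = 1..n. v j * dl j l) - dl i l * csum i v"
      by (simp add: csum_def algebra_simps sum_subtractf sum_distrib_left)
    also have "(\<Sum>j = 1..n. v j * dl j l) = v l"
    proof -
      have "(\<Sum>j = 1..n. v j * dl j l) = (\<Sum>j = 1..n. if l = j then v l else 0)"
        by (rule sum.cong) (auto simp: dl_def)
      thus ?thesis using l by simp
    qed
    finally show "(\<Sum>j\<leftarrow>[1..<n+1]. v j * (dl j l - cartan i j * dl i l)) = sv i v l"
      by (simp add: sv_def)
  qed
  finally show ?thesis .
qed

lemma cartan_split: "1 \<le> i \<Longrightarrow> cartan i j = (if j = i then 2 else 0) + (if j = i + 1 then -1 else 0)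
   + (if j + 1 = i then (if i = 2 then -2 else -1) else 0)"
  by (auto simp: cartan_def)

lemma csum_formula: assumes "1 \<le> i" "i \<le> n"
  shows "csum i v = 2 * v i - (if i + 1 \<le> n then v (i+1) else 0)
     - (if i = 2 then 2 * v 1 else if 3 \<le> i then v (i - 1) else 0)"
proof -
  have "csum i v = (\<Sum>j = 1..n. (if j = i then 2 * v i else 0) + (if j = i + 1 then - v (i+1) else 0)
     + (if j = i - 1 \<and> 2 \<le> i then (if i = 2 then -2 else -1) * v (i - 1) else 0))"
    unfolding csum_def using assms
    by (intro sum.cong refl) (auto simp: cartan_split)
  also have "\<dots> = 2 * v i - (if i + 1 \<le> n then v (i+1) else 0)
     - (if i = 2 then 2 * v 1 else if 3 \<le> i then v (i - 1) else 0)"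
    using assms by (simp add: sum.distrib sum.delta' split: if_split_asm) (auto simp: One_nat_def)
  finally show ?thesis .
qed

end

declare One_nat_def [simp del]
context uq begin

definition Pv :: "nat \<Rightarrow> nat \<Rightarrow> nat \<Rightarrow> int" where
  "Pv k l x = (if l \<le> x \<and> x \<le> k then 1 else 0)"
definition Qv :: "nat \<Rightarrow> nat \<Rightarrow> nat \<Rightarrow> int" where
  "Qv k l x = (if x = 1 then 1 else if x \<le> l then 2 else if x \<le> k then 1 else 0)"

lemma stP: assumes "2 \<le> m" "m + 1 \<le> k" "k \<le> n" shows "T m (KM (Pv k (m+1))) = KM (Pv k m)"
proof -
  have m: "m \<in> {1..n}" using assms by auto
  have c: "csum m (Pv k (Suc m)) = -1" using assms by (auto simp: csum_formula Pv_def)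
  show ?thesis unfolding T_KM[OF m] using assms by (intro KM_cong) (auto simp: sv_def c Pv_def dl_def)
qed

lemma st1: assumes "2 \<le> k" "k \<le> n" shows "T 1 (KM (Pv k 2)) = KM (Qv k 1)"
proof -
  have c: "csum 1 (Pv k 2) = -1" using assms by (auto simp: csum_formula Pv_def)
  show ?thesis unfolding T_KM[OF one_in] using assms by (intro KM_cong) (auto simp: sv_def c Pv_def Qv_def dl_def)
qed

lemma stQup: assumes "1 \<le> l" "l + 2 \<le> k" "k \<le> n" shows "T (l+1) (KM (Qv k l)) = KM (Qv k (l+1))"
proof -
  have m: "l + 1 \<in> {1..n}" using assms by auto
  have c: "csum (Suc l) (Qv k l) = -1" using assms by (auto simp: csum_formula Qv_def)
  show ?thesis unfolding T_KM[OF m] using assms by (intro KM_cong) (auto simp: sv_def c Qv_def dl_def)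
qed

lemma stQk: assumes "2 \<le> k" "k \<le> n" shows "T k (KM (Qv k (k-1))) = KM (Qv k (k-1))"
proof -
  have m: "k \<in> {1..n}" using assms by auto
  have c: "csum k (Qv k (k-1)) = 0" using assms by (auto simp: csum_formula Qv_def)
  show ?thesis unfolding T_KM[OF m] using assms by (intro KM_cong) (auto simp: sv_def c Qv_def dl_def)
qed

lemma stQdn: assumes "2 \<le> l" "l + 1 \<le> k" "k \<le> n" shows "T l (KM (Qv k l)) = KM (Qv k (l-1))"
proof -
  have m: "l \<in> {1..n}" using assms by auto
  have c: "csum l (Qv k l) = 1" using assms by (auto simp: csum_formula Qv_def)
  show ?thesis unfolding T_KM[OF m] using assms by (intro KM_cong) (auto simp: sv_def c Qv_def dl_def)
qed

lemma st1b: assumes "2 \<le> k" "k \<le> n" shows "T 1 (KM (Qv k 1)) = KM (Pv k 2)"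
proof -
  have c: "csum 1 (Qv k 1) = 1" using assms by (auto simp: csum_formula Qv_def)
  show ?thesis unfolding T_KM[OF one_in] using assms by (intro KM_cong) (auto simp: sv_def c Pv_def Qv_def dl_def)
qed

lemma stPup: assumes "2 \<le> l" "l + 1 \<le> k" "k \<le> n" shows "T l (KM (Pv k l)) = KM (Pv k (l+1))"
proof -
  have m: "l \<in> {1..n}" using assms by auto
  have c: "csum l (Pv k l) = 1" using assms by (auto simp: csum_formula Pv_def)
  show ?thesis unfolding T_KM[OF m] using assms by (intro KM_cong) (auto simp: sv_def c Pv_def dl_def)
qed


lemma Kk_KM: "k \<in> {1..n} \<Longrightarrow> K k = KM (Pv k k)"
proof -
  assume k: "k \<in> {1..n}"
  have "KM (Pv k k) = KM (\<lambda>j. if j = k then 1 else 0)" by (rule KM_cong) (auto simp: Pv_def)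
  thus ?thesis using KM_delta[OF k, of 1] by (simp add: Kp_1)
qed

lemma NK: assumes "2 \<le> k" "k \<le> n" shows "Tw (Wp k) (K k) = K k"
proof -
  have kn: "k \<in> {1..n}" using assms by auto
  have A: "Tw [m..<k] (KM (Pv k k)) = KM (Pv k m)" if "2 \<le> m" "m \<le> k" for m
    using that
  proof (induction "k - m" arbitrary: m)
    case 0 thus ?case by simp
  next
    case (Suc d)
    hence mk: "m < k" by simp
    have "[m..<k] = m # [m+1..<k]" using mk upt_conv_Cons by simp
    hence "Tw [m..<k] (KM (Pv k k)) = T m (KM (Pv k (m+1)))" using Suc by (simp del: upt_Suc)
    thus ?case using stP[of m k] Suc mk assms by simp
  qed
  have C: "Tw (rev [2..<m+1]) (KM (Qv k 1)) = KM (Qv k m)" if "1 \<le> m" "m + 1 \<le> k" for m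
    using that
  proof (induction m)
    case 0 thus ?case by simp
  next
    case (Suc m)
    show ?case
    proof (cases "m = 0")
      case True thus ?thesis by (simp add: upt_rec One_nat_def)
    next
      case False
      have "Tw (rev [2..<Suc m + 1]) (KM (Qv k 1)) = T (m+1) (KM (Qv k m))" using Suc False by simp
      thus ?thesis using stQup[of m k] Suc False assms by simp
    qed
  qed
  have D1: "Tw [m..<k] (KM (Qv k (k-1))) = KM (Qv k (m-1))" if "2 \<le> m" "m \<le> k" for m
    using that
  proof (induction "k - m" arbitrary: m)
    case 0 thus ?case by simp
  next
    case (Suc d)
    hence mk: "m < k" by simp
    have "[m..<k] = m # [m+1..<k]" using mk upt_conv_Cons by simp
    hence "Tw [m..<k] (KM (Qv k (k-1))) = T m (KM (Qv k m))" using Suc by (simp del: upt_Suc)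
    thus ?case using stQdn[of m k] Suc mk assms by simp
  qed
  have D3: "Tw (rev [2..<m]) (KM (Pv k 2)) = KM (Pv k m)" if "2 \<le> m" "m \<le> k" for m
    using that
  proof (induction m)
    case 0 thus ?case by simp
  next
    case (Suc m)
    show ?case
    proof (cases "m = 1")
      case True thus ?thesis by (simp add: upt_rec)
    next
      case False
      hence m2: "2 \<le> m" using Suc by simp
      have "Tw (rev [2..<Suc m]) (KM (Pv k 2)) = T m (KM (Pv k m))" using Suc m2 by simp
      thus ?thesis using stPup[of m k] Suc m2 assms by simp
    qed
  qed
  have D4: "Tw (Gword (k-2)) (K k) = K k"
  proof (rule Tw_fix)
    fix i assume "i \<in> set (Gword (k-2))"
    hence i: "1 \<le> i" "i + 2 \<le> k" using set_Gword by fastforce+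
    hence c: "cartan i k = 0" by (intro cartan_far) simp
    show "T i (K k) = K k" using T_K[of i k] i c assms by (simp add: Kpow_def)
  qed
  have e: "k - 1 + 1 = k" using assms by simp
  have wp: "Wp k = Gword (k-2) @ rev [2..<k] @ [1] @ [2..<k] @ rev [2..<k+1] @ [1] @ [2..<k]"
    unfolding Wp_def using Gword_pred[of k] assms by (simp add: gamma_word_def e del: upt_Suc)
  have r: "rev [2..<k+1] = k # rev [2..<k]" using assms by simp
  have s1: "Tw [2..<k] (K k) = KM (Pv k 2)" using A[of 2] assms Kk_KM[OF kn] by simp
  have s2: "T 1 (KM (Pv k 2)) = KM (Qv k 1)" using st1 assms by simp
  have s3: "Tw (rev [2..<k+1]) (KM (Qv k 1)) = KM (Qv k (k-1))"
  proof -
    have "Tw (rev [2..<k]) (KM (Qv k 1)) = KM (Qv k (k-1))" using C[of "k-1"] assms e by simp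
    thus ?thesis unfolding r using stQk assms by simp
  qed
  have s4: "Tw [2..<k] (KM (Qv k (k-1))) = KM (Qv k 1)" using D1[of 2] assms by (simp add: One_nat_def)
  have s5: "Tw (rev [2..<k]) (KM (Pv k 2)) = K k" using D3[of k] assms Kk_KM[OF kn] by simp
  show ?thesis unfolding wp
    by (simp only: Tw_append Tw_Cons Tw_Nil s1 s2 s3 s4 st1b[OF assms] s5 D4)
qed

lemma Tw_one: "okw w \<Longrightarrow> Tw w 1 = 1" by (induct w) (auto simp: T_one)

lemma NKi: assumes "2 \<le> k" "k \<le> n" shows "Tw (Wp k) (Kinv k) = Kinv k"
proof -
  have kn: "k \<in> {1..n}" using assms by auto
  have ok: "okw (Wp k)" using okw_Wp assms by simp
  have a: "Tw (Wp k) (Kinv k) * K k = 1"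
    using Tw_mult[OF ok, of "Kinv k" "K k"] NK[OF assms] KinvK[OF kn] Tw_one[OF ok] by simp
  have "Tw (Wp k) (Kinv k) = Tw (Wp k) (Kinv k) * (K k * Kinv k)" using KKinv[OF kn] by simp
  also have "\<dots> = Kinv k" using a by (simp add: mult.assoc[symmetric])
  finally show ?thesis .
qed

end

declare One_nat_def [simp del]
context uq begin

lemma NEF: assumes "2 \<le> k" "k \<le> n"
  shows "Tw (Wp k) (E k) = E k \<and> Tw (Wp k) (F k) = F k"
proof -
  interpret op: uq ofo "inverse q" n "\<lambda>i. Opp (F i)" "\<lambda>i. Opp (E i)" "\<lambda>i. Opp (Kinv i)" "\<lambda>i. Opp (K i)"
    "\<lambda>i x. Opp (T i (un x))" by (rule uq_opp)
  have tr: "op.Tw w (Opp x) = Opp (Tw w x)" for w x by (induct w) simp_all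
  have wp: "op.Wp k = Wp k" for k by (simp add: op.Wp_def Wp_def)
  have trE: "op.Tw (Wp k) (Opp (F k)) = Opp (F k) \<longleftrightarrow> Tw (Wp k) (F k) = F k" for k
    by (simp add: tr)
  have trF: "op.Tw (Wp k) (Opp (E k)) = Opp (E k) \<longleftrightarrow> Tw (Wp k) (E k) = E k" for k
    by (simp add: tr)
  show ?thesis using assms
  proof (induction k rule: nat_less_induct)
    case (1 k)
    show ?case
    proof (cases "k = 2")
      case True
      have a: "Tw (Wp 2) (E 2) = E 2" by (rule NE2)
      have "op.Tw (op.Wp 2) (Opp (F 2)) = Opp (F 2)" by (rule op.NE2)
      hence b: "Tw (Wp 2) (F 2) = F 2" using trE wp by simp
      show ?thesis using a b True by simp
    next
      case False
      hence k3: "3 \<le> k" using 1 by simp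
      have IH: "Tw (Wp (k-1)) (E (k-1)) = E (k-1) \<and> Tw (Wp (k-1)) (F (k-1)) = F (k-1)"
        using 1 k3 by (intro 1(1)[rule_format]) auto
      have P: "Tw (Gword (k-1)) (E (k-1)) = - (F (k-1) * Kinv (k-1))"
        using P_lemma[of "k-1"] IH NKi[of "k-1"] 1 k3 by simp
      have a: "Tw (Wp k) (E k) = E k" using NE_step[of k] IH P 1 k3 by simp
      have IHo: "op.Tw (op.Wp (k-1)) (Opp (F (k-1))) = Opp (F (k-1))"
        using IH trE wp by simp
      have IHo2: "op.Tw (op.Wp (k-1)) (Opp (E (k-1))) = Opp (E (k-1))"
        using IH trF wp by simp
      have Po: "op.Tw (Gword (k-1)) (Opp (F (k-1))) = - (Opp (E (k-1)) * Opp (K (k-1)))"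
        using op.P_lemma[of "k-1"] IHo2 op.NKi[of "k-1"] 1 k3 by simp
      have "op.Tw (op.Wp k) (Opp (F k)) = Opp (F k)"
        using op.NE_step[of k] IHo Po 1 k3 by simp
      hence b: "Tw (Wp k) (F k) = F k" using trE wp by simp
      show ?thesis using a b by simp
    qed
  qed
qed


lemma main: "Epos T E 1 2 = qcomm of_k (q ^ 2) (E 1) (E 2)
    \<and> (\<forall>i j. 1 \<le> i \<and> i + 2 \<le> j \<and> j \<le> n \<longrightarrow>
          Eneg T E i j = qcomm of_k q (Eneg T E i (j - 1)) (E j)
        \<and> Epos T E i j = qcomm of_k q (Epos T E i (j - 1)) (E j))
    \<and> (\<forall>j. 3 \<le> j \<and> j \<le> n \<longrightarrow>
          Epos T E (j - 1) j = qcomm of_k q (E (j - 1)) (Epos T E (j - 2) j))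
    \<and> (\<forall>j. 2 \<le> j \<and> j \<le> n \<longrightarrow>
          Ediag T E j = of_k (inverse (qnum q 2)) *
            (Epos T E 1 j * Eneg T E 1 j - Eneg T E 1 j * Epos T E 1 j))"
proof (intro conjI allI impI)
  show "Epos T E 1 2 = qcomm of_k (q ^ 2) (E 1) (E 2)" using c1 by (simp add: Q_qcomm)
next
  fix i j assume a: "1 \<le> i \<and> i + 2 \<le> j \<and> j \<le> n"
  show "Eneg T E i j = qcomm of_k q (Eneg T E i (j - 1)) (E j)" using c2neg a by (simp add: Q_qcomm)
  show "Epos T E i j = qcomm of_k q (Epos T E i (j - 1)) (E j)" using c2pos a by (simp add: Q_qcomm)
next
  fix j assume a: "3 \<le> j \<and> j \<le> n"
  have "2 \<le> j - 1" "j - 1 \<le> n" using a by auto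
  from NEF[OF this] have "Tw (Wp (j-1)) (E (j-1)) = E (j-1)" by blast
  thus "Epos T E (j - 1) j = qcomm of_k q (E (j - 1)) (Epos T E (j - 2) j)"
    using c3[of j] a by (simp add: Q_qcomm)
next
  fix j assume a: "2 \<le> j \<and> j \<le> n"
  show "Ediag T E j = of_k (inverse (qnum q 2)) *
            (Epos T E 1 j * Eneg T E 1 j - Eneg T E 1 j * Epos T E 1 j)"
    using c4[of j] a by (simp add: S_def)
qed

end

theorem proposition4p6:
  fixes of_k :: "'k::field_char_0 \<Rightarrow> 'a::ring_1"
    and q :: 'k and n :: nat
    and E F K Kinv :: "nat \<Rightarrow> 'a"
    and T :: "nat \<Rightarrow> 'a \<Rightarrow> 'a"
  assumes of_k_1: "of_k 1 = 1"
    and of_k_add: "\<forall>a b. of_k (a + b) = of_k a + of_k b"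
    and of_k_mult: "\<forall>a b. of_k (a * b) = of_k a * of_k b"
    and of_k_central: "\<forall>c x. of_k c * x = x * of_k c"
    and q_nz: "q \<noteq> 0"
    and q_not_root: "\<forall>m::nat. m > 0 \<longrightarrow> q ^ m \<noteq> 1"
    and n_ge: "n \<ge> 2"
    and rels: "Uq_relations of_k n q E F K Kinv"
    and lusztig: "lusztig_T of_k n q E F K Kinv T"
  shows "Epos T E 1 2 = qcomm of_k (q ^ 2) (E 1) (E 2)
    \<and> (\<forall>i j. 1 \<le> i \<and> i + 2 \<le> j \<and> j \<le> n \<longrightarrow>
          Eneg T E i j = qcomm of_k q (Eneg T E i (j - 1)) (E j)
        \<and> Epos T E i j = qcomm of_k q (Epos T E i (j - 1)) (E j))
    \<and> (\<forall>j. 3 \<le> j \<and> j \<le> n \<longrightarrow>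
          Epos T E (j - 1) j = qcomm of_k q (E (j - 1)) (Epos T E (j - 2) j))
    \<and> (\<forall>j. 2 \<le> j \<and> j \<le> n \<longrightarrow>
          Ediag T E j = of_k (inverse (qnum q 2)) *
            (Epos T E 1 j * Eneg T E 1 j - Eneg T E 1 j * Epos T E 1 j))"
proof -
  interpret uq of_k q n E F K Kinv T
    by (intro uq.intro sc.intro uq_axioms.intro) (fact assms)+
  show ?thesis by (rule main)
qed


end
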